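(* The Lie ideal $\operatorname{Im}\psi_0$ of the Lie algebra $\operatorname{Ker}\psi_1$ and the Lie ideal $\operatorname{Ad}_{E^e}(\Lambda)$ of $\operatorname{Der}_{E^e}(\Lambda)$ (inner derivations of $\Lambda$ which are $E$-bimodule morphisms) are isomorphic Lie algebras.
   Context: Let $k$ be an algebraically closed field and $Q$ a finite quiver; $Q_n$ is the set of paths of length $n$ ($Q_0$ = vertices, $Q_1$ = arrows), $s(\gamma),t(\gamma)$ are source and terminus of a path $\gamma$; in $kQ$, $\beta\alpha$ is the concatenation "first $\alpha$, then $\beta$" if $t(\alpha)=s(\beta)$, and $0$ otherwise. Let $Z$ be a minimal set of paths of length $\ge 2$ (no proper subpath of an element of $Z$ lies in $Z$) such that $\Lambda=kQ/\langle Z\rangle$ is finite dimensional; $E\subset\Lambda$ is the subalgebra spanned by the vertices. Let $B$ be the set of paths (vertices included) not containing any element of $Z$ as a subpath. Paths are parallel if they have the same source and terminus; $X//Y$ is the set of pairs of parallel paths in $X\times Y$ and $k(X//Y)$ the vector space with basis $X//Y$. For a path $\varepsilon$ and $(a,\gamma)\in Q_1//B$, $\varepsilon^{(a,\gamma)}$ is the sum of all paths in $B$ obtained by replacing one occurrence of $a$ in $\varepsilon$ by $\gamma$ ($0$ if none), and $(\eta,\varepsilon^{(a,\gamma)})=\sum_i(\eta,\varepsilon_i)$ if $\varepsilon^{(a,\gamma)}=\sum_i\varepsilon_i$. Maps: $\psi_0:k(Q_0//B)\to k(Q_1//B)$, $(e,\gamma)\mapsto\sum_{a\in Q_1,\ s(a)=e,\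 a\gamma\in B}(a,a\gamma)-\sum_{a\in Q_1,\ t(a)=e,\ \gamma a\in B}(a,\gamma a)$; $\psi_1:k(Q_1//B)\to k(Z//B)$, $(a,\gamma)\mapsto\sum_{p\in Z}(p,p^{(a,\gamma)})$. $k(Q_1//B)$ carries the bilinear bracket $[(a,\gamma),(b,\varepsilon)]=(b,\varepsilon^{(a,\gamma)})-(a,\gamma^{(b,\varepsilon)})$, for which $\operatorname{Ker}\psi_1$ is a Lie subalgebra and $\operatorname{Im}\psi_0$ a Lie ideal of it. *)

theory Defs
  imports "HOL-Library.Sublist" "HOL-Computational_Algebra.Polynomial"
begin

definition alg_closed :: "'k::field itself \<Rightarrow> bool" where
  "alg_closed _ \<longleftrightarrow> (\<forall>p::'k poly. 0 < degree p \<longrightarrow> (\<exists>x. poly p x = 0))"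

text \<open>A path is a pair (v, as): v is its source vertex and as the list of its
  arrows in the order in which they are traversed.  Thus (v, []) is the trivial path
  at v, and the path usually written alpha_n ... alpha_1 is (s(alpha_1), [alpha_1,...,alpha_n]).\<close>

type_synonym ('v,'a) path = "'v \<times> 'a list"

definition psrc :: "('v,'a) path \<Rightarrow> 'v" where
  "psrc p = fst p"

definition ptgt :: "('a \<Rightarrow> 'v) \<Rightarrow> ('v,'a) path \<Rightarrow> 'v" where
  "ptgt tgt p = (if snd p = [] then fst p else tgt (last (snd p)))"

definition valid_path :: "'v set \<Rightarrow> 'a set \<Rightarrow> ('a \<Rightarrow> 'v) \<Rightarrow> ('a \<Rightarrow> 'v) \<Rightarrow> ('v,'a) path \<Rightarrow> bool" where
  "valid_path Q0 Q1 src tgt p \<longleftrightarrow>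
     fst p \<in> Q0 \<and> set (snd p) \<subseteq> Q1 \<and>
     (snd p \<noteq> [] \<longrightarrow> src (hd (snd p)) = fst p) \<and>
     (\<forall>i. Suc i < length (snd p) \<longrightarrow> tgt (snd p ! i) = src (snd p ! Suc i))"

text \<open>Concatenation: pcat beta alpha is "first alpha, then beta" (only used when composable).\<close>
definition pcat :: "('v,'a) path \<Rightarrow> ('v,'a) path \<Rightarrow> ('v,'a) path" where
  "pcat beta alpha = (fst alpha, snd alpha @ snd beta)"

definition arr :: "('a \<Rightarrow> 'v) \<Rightarrow> 'a \<Rightarrow> ('v,'a) path" where
  "arr src a = (src a, [a])"

definition Bset :: "'v set \<Rightarrow> 'a set \<Rightarrow> ('a \<Rightarrow> 'v) \<Rightarrow> ('a \<Rightarrow> 'v) \<Rightarrow> ('v,'a) path set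
                     \<Rightarrow> ('v,'a) path set" where
  "Bset Q0 Q1 src tgt Z = {d. valid_path Q0 Q1 src tgt d \<and> \<not> (\<exists>p\<in>Z. sublist (snd p) (snd d))}"

text \<open>Elements of Lambda are k-valued coefficient functions supported on B.\<close>
definition lam_space :: "('v,'a) path set \<Rightarrow> (('v,'a) path \<Rightarrow> 'k::field) set" where
  "lam_space B = {x. \<forall>d. d \<notin> B \<longrightarrow> x d = 0}"

definition lam_mult :: "('v,'a) path set \<Rightarrow> ('a \<Rightarrow> 'v)
     \<Rightarrow> (('v,'a) path \<Rightarrow> 'k::field) \<Rightarrow> (('v,'a) path \<Rightarrow> 'k) \<Rightarrow> (('v,'a) path \<Rightarrow> 'k)" where
  "lam_mult B tgt x y = (\<lambda>d. if d \<in> B then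
      (\<Sum>(beta, alpha) \<in> {(beta, alpha). beta \<in> B \<and> alpha \<in> B \<and> ptgt tgt alpha = psrc beta
                                  \<and> pcat beta alpha = d}. x beta * y alpha)
      else 0)"

definition E_space :: "('v,'a) path set \<Rightarrow> (('v,'a) path \<Rightarrow> 'k::field) set" where
  "E_space B = {x \<in> lam_space B. \<forall>d. snd d \<noteq> [] \<longrightarrow> x d = 0}"

definition is_E_derivation :: "('v,'a) path set \<Rightarrow> ('a \<Rightarrow> 'v)
     \<Rightarrow> ((('v,'a) path \<Rightarrow> 'k::field) \<Rightarrow> (('v,'a) path \<Rightarrow> 'k)) \<Rightarrow> bool" where
  "is_E_derivation B tgt D \<longleftrightarrow>
     (\<forall>x \<in> lam_space B. D x \<in> lam_space B) \<and>
     (\<forall>x \<in> lam_space B. \<forall>y \<in> lam_space B. D (\<lambda>d. x d + y d) = (\<lambda>d. D x d + D y d)) \<and>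
     (\<forall>c. \<forall>x \<in> lam_space B. D (\<lambda>d. c * x d) = (\<lambda>d. c * D x d)) \<and>
     (\<forall>x \<in> lam_space B. \<forall>y \<in> lam_space B.
        D (lam_mult B tgt x y) = (\<lambda>d. lam_mult B tgt (D x) y d + lam_mult B tgt x (D y) d)) \<and>
     (\<forall>u \<in> E_space B. \<forall>w \<in> E_space B. \<forall>x \<in> lam_space B.
        D (lam_mult B tgt u (lam_mult B tgt x w)) = lam_mult B tgt u (lam_mult B tgt (D x) w))"

text \<open>Inner derivation ad_x = [x, -], as a map on Lambda (zero outside Lambda).\<close>
definition ad_map :: "('v,'a) path set \<Rightarrow> ('a \<Rightarrow> 'v)
     \<Rightarrow> (('v,'a) path \<Rightarrow> 'k::field) \<Rightarrow> (('v,'a) path \<Rightarrow> 'k) \<Rightarrow> (('v,'a) path \<Rightarrow> 'k)" where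
  "ad_map B tgt x = (\<lambda>y. if y \<in> lam_space B
       then (\<lambda>d. lam_mult B tgt x y d - lam_mult B tgt y x d) else (\<lambda>d. 0))"

definition Ad_E :: "('v,'a) path set \<Rightarrow> ('a \<Rightarrow> 'v)
     \<Rightarrow> ((('v,'a) path \<Rightarrow> 'k::field) \<Rightarrow> (('v,'a) path \<Rightarrow> 'k)) set" where
  "Ad_E B tgt = {D. \<exists>x \<in> lam_space B. D = ad_map B tgt x \<and> is_E_derivation B tgt D}"

definition comm_bracket :: "(('y \<Rightarrow> 'k::field) \<Rightarrow> ('y \<Rightarrow> 'k)) \<Rightarrow> (('y \<Rightarrow> 'k) \<Rightarrow> ('y \<Rightarrow> 'k))
     \<Rightarrow> (('y \<Rightarrow> 'k) \<Rightarrow> ('y \<Rightarrow> 'k))" where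
  "comm_bracket D1 D2 = (\<lambda>y. \<lambda>d. D1 (D2 y) d - D2 (D1 y) d)"

type_synonym ('v,'a,'k) pvec = "(('v,'a) path \<times> ('v,'a) path) \<Rightarrow> 'k"

definition pt :: "'x \<Rightarrow> 'x \<Rightarrow> 'k::field" where
  "pt p = (\<lambda>q. if q = p then 1 else 0)"

text \<open>Q0//B (vertices as trivial paths) and Q1//B (arrows as paths of length 1).\<close>
definition Q0B :: "'v set \<Rightarrow> ('a \<Rightarrow> 'v) \<Rightarrow> ('v,'a) path set \<Rightarrow> (('v,'a) path \<times> ('v,'a) path) set" where
  "Q0B Q0 tgt B = {((e, []), g) | e g. e \<in> Q0 \<and> g \<in> B \<and> psrc g = e \<and> ptgt tgt g = e}"

definition Q1B :: "'a set \<Rightarrow> ('a \<Rightarrow> 'v) \<Rightarrow> ('a \<Rightarrow> 'v) \<Rightarrow> ('v,'a) path set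
                     \<Rightarrow> (('v,'a) path \<times> ('v,'a) path) set" where
  "Q1B Q1 src tgt B = {(arr src a, g) | a g. a \<in> Q1 \<and> g \<in> B \<and> psrc g = src a \<and> ptgt tgt g = tgt a}"

definition psi0 :: "'a set \<Rightarrow> ('a \<Rightarrow> 'v) \<Rightarrow> ('a \<Rightarrow> 'v) \<Rightarrow> ('v,'a) path set
                   \<Rightarrow> (('v,'a) path \<times> ('v,'a) path) \<Rightarrow> ('v,'a,'k::field) pvec" where
  "psi0 Q1 src tgt B eg = (\<lambda>q.
      (\<Sum>a \<in> {a \<in> Q1. src a = fst (fst eg) \<and> pcat (arr src a) (snd eg) \<in> B}.
          pt (arr src a, pcat (arr src a) (snd eg)) q)
    - (\<Sum>a \<in> {a \<in> Q1. tgt a = fst (fst eg) \<and> pcat (snd eg) (arr src a) \<in> B}.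
          pt (arr src a, pcat (snd eg) (arr src a)) q))"

definition Im_psi0 :: "'v set \<Rightarrow> 'a set \<Rightarrow> ('a \<Rightarrow> 'v) \<Rightarrow> ('a \<Rightarrow> 'v) \<Rightarrow> ('v,'a) path set
                       \<Rightarrow> ('v,'a,'k::field) pvec set" where
  "Im_psi0 Q0 Q1 src tgt B =
     {(\<lambda>q. \<Sum>p \<in> Q0B Q0 tgt B. c p * psi0 Q1 src tgt B p q) | c. True}"

definition repl :: "('v,'a) path \<Rightarrow> nat \<Rightarrow> ('v,'a) path \<Rightarrow> ('v,'a) path" where
  "repl eps i g = (fst eps, take i (snd eps) @ snd g @ drop (Suc i) (snd eps))"

text \<open>(eta, eps^(a,g)) = sum over all occurrences of a in eps whose replacement lies in B.\<close>
definition subst_pair :: "('v,'a) path set \<Rightarrow> ('v,'a) path \<Rightarrow> ('v,'a) path \<Rightarrow> 'a \<Rightarrow> ('v,'a) path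
                          \<Rightarrow> ('v,'a,'k::field) pvec" where
  "subst_pair B eta eps a g = (\<lambda>q.
     \<Sum>i \<in> {i. i < length (snd eps) \<and> snd eps ! i = a \<and> repl eps i g \<in> B}. pt (eta, repl eps i g) q)"

text \<open>Bracket on basis elements: [(a,g),(b,eps)] = (b, eps^(a,g)) - (a, g^(b,eps)).\<close>
definition brb :: "('v,'a) path set \<Rightarrow> (('v,'a) path \<times> ('v,'a) path) \<Rightarrow> (('v,'a) path \<times> ('v,'a) path)
                   \<Rightarrow> ('v,'a,'k::field) pvec" where
  "brb B p q = (\<lambda>r. subst_pair B (fst q) (snd q) (hd (snd (fst p))) (snd p) r
                  - subst_pair B (fst p) (snd p) (hd (snd (fst q))) (snd q) r)"

definition bracket1 :: "'a set \<Rightarrow> ('a \<Rightarrow> 'v) \<Rightarrow> ('a \<Rightarrow> 'v) \<Rightarrow> ('v,'a) path set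
     \<Rightarrow> ('v,'a,'k::field) pvec \<Rightarrow> ('v,'a,'k) pvec \<Rightarrow> ('v,'a,'k) pvec" where
  "bracket1 Q1 src tgt B u v = (\<lambda>r.
     \<Sum>p \<in> Q1B Q1 src tgt B. \<Sum>q \<in> Q1B Q1 src tgt B. u p * v q * brb B p q r)"

definition lie_iso :: "('x \<Rightarrow> 'k::field) set \<Rightarrow> (('x \<Rightarrow> 'k) \<Rightarrow> ('x \<Rightarrow> 'k) \<Rightarrow> ('x \<Rightarrow> 'k))
   \<Rightarrow> ('y \<Rightarrow> ('z \<Rightarrow> 'k)) set \<Rightarrow> (('y \<Rightarrow> ('z \<Rightarrow> 'k)) \<Rightarrow> ('y \<Rightarrow> ('z \<Rightarrow> 'k)) \<Rightarrow> ('y \<Rightarrow> ('z \<Rightarrow> 'k)))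
   \<Rightarrow> (('x \<Rightarrow> 'k) \<Rightarrow> ('y \<Rightarrow> ('z \<Rightarrow> 'k))) \<Rightarrow> bool" where
  "lie_iso L1 br1 L2 br2 f \<longleftrightarrow>
     bij_betw f L1 L2 \<and>
     (\<forall>u \<in> L1. \<forall>v \<in> L1. f (\<lambda>r. u r + v r) = (\<lambda>y d. f u y d + f v y d)) \<and>
     (\<forall>c. \<forall>u \<in> L1. f (\<lambda>r. c * u r) = (\<lambda>y d. c * f u y d)) \<and>
     (\<forall>u \<in> L1. \<forall>v \<in> L1. f (br1 u v) = br2 (f u) (f v))"

end

theory Submission
  imports Defs
begin

locale quiv =
  fixes Q0 :: "'v set" and Q1 :: "'a set" and src tgt :: "'a \<Rightarrow> 'v"
    and Z :: "('v,'a) path set"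
  assumes arrows: "\<forall>a \<in> Q1. src a \<in> Q0 \<and> tgt a \<in> Q0"
    and Zlen: "\<forall>p \<in> Z. length (snd p) \<ge> 2"
    and finB: "finite (Bset Q0 Q1 src tgt Z)"
    and finQ1: "finite Q1"
    and finQ0: "finite Q0"
begin

abbreviation "B \<equiv> Bset Q0 Q1 src tgt Z"
abbreviation "valid \<equiv> valid_path Q0 Q1 src tgt"

lemma ptgt_Q0: "valid p \<Longrightarrow> ptgt tgt p \<in> Q0"
  using arrows unfolding valid_path_def ptgt_def
  by (cases "snd p = []") (auto dest!: last_in_set)

lemma valid_split:
  assumes v: "valid (pcat be al)" and c: "ptgt tgt al = psrc be"
  shows "valid al \<and> valid be"
proof -
  obtain v as where al: "al = (v, as)" by (cases al)
  obtain w bs where be: "be = (w, bs)" by (cases be)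
  have V: "v \<in> Q0" "set as \<subseteq> Q1" "set bs \<subseteq> Q1"
     "as @ bs \<noteq> [] \<Longrightarrow> src (hd (as @ bs)) = v"
     "\<And>i. Suc i < length (as @ bs) \<Longrightarrow> tgt ((as@bs) ! i) = src ((as@bs) ! Suc i)"
    using v unfolding valid_path_def pcat_def al be by auto
  have w: "w = ptgt tgt (v, as)" using c al be by (simp add: psrc_def)
  have va: "valid al"
    unfolding al valid_path_def
  proof (intro conjI allI impI)
    show "fst (v, as) \<in> Q0" using V by simp
    show "set (snd (v, as)) \<subseteq> Q1" using V by simp
    show "src (hd (snd (v, as))) = fst (v, as)" if "snd (v, as) \<noteq> []" using that V(4) by simp
    fix i assume "Suc i < length (snd (v, as))"
    then show "tgt (snd (v, as) ! i) = src (snd (v, as) ! Suc i)"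
      using V(5)[of i] by (simp add: nth_append)
  qed
  have vb: "valid be"
    unfolding be valid_path_def
  proof (intro conjI allI impI)
    show "fst (w, bs) \<in> Q0" using ptgt_Q0[OF va] w al by simp
    show "set (snd (w, bs)) \<subseteq> Q1" using V by simp
    show "src (hd (snd (w, bs))) = fst (w, bs)" if "snd (w, bs) \<noteq> []"
    proof (cases "as = []")
      case True then show ?thesis using that V(4) w by (simp add: ptgt_def)
    next
      case False
      have "tgt ((as@bs) ! (length as - 1)) = src ((as@bs) ! Suc (length as - 1))"
        using V(5)[of "length as - 1"] that False by simp
      then show ?thesis using False that w
        by (simp add: ptgt_def nth_append last_conv_nth hd_conv_nth)
    qed
    fix i assume "Suc i < length (snd (w, bs))"
    then show "tgt (snd (w, bs) ! i) = src (snd (w, bs) ! Suc i)"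
      using V(5)[of "length as + i"] by (simp add: nth_append)
  qed
  show ?thesis using va vb by simp
qed

lemma B_split:
  assumes "pcat be al \<in> B" "ptgt tgt al = psrc be"
  shows "al \<in> B \<and> be \<in> B"
proof -
  have v: "valid al" "valid be" using valid_split[of be al] assms unfolding Bset_def by auto
  have n: "\<not> (\<exists>p\<in>Z. sublist (snd p) (snd al @ snd be))"
    using assms(1) unfolding Bset_def pcat_def by auto
  have "\<not> (\<exists>p\<in>Z. sublist (snd p) (snd al))"
    using n sublist_order.order.trans[OF _ sublist_append_rightI] by blast
  moreover have "\<not> (\<exists>p\<in>Z. sublist (snd p) (snd be))"
    using n sublist_order.order.trans[OF _ sublist_append_leftI] by blast
  ultimately show ?thesis using v unfolding Bset_def by auto
qed

lemma psrc_pcat[simp]: "psrc (pcat be al) = psrc al"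
  by (simp add: psrc_def pcat_def)

lemma ptgt_pcat: "ptgt tgt al = psrc be \<Longrightarrow> ptgt tgt (pcat be al) = ptgt tgt be"
  by (auto simp: ptgt_def psrc_def pcat_def split: if_splits)

lemma pcat_assoc: "pcat (pcat c b) a = pcat c (pcat b a)"
  by (simp add: pcat_def)

lemma vertex_B: "e \<in> Q0 \<Longrightarrow> (e, []) \<in> B"
  using Zlen unfolding Bset_def valid_path_def   using Zlen unfolding Bset_def valid_path_def by (force simp: sublist_Nil_right)

lemma arr_B: "b \<in> Q1 \<Longrightarrow> arr src b \<in> B"
proof -
  assume b: "b \<in> Q1"
  have "valid (arr src b)" using b arrows unfolding valid_path_def arr_def by auto
  moreover have "\<not> sublist (snd p) [b]" if "p \<in> Z" for p
  proof
    assume "sublist (snd p) [b]"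
    then have "length (snd p) \<le> 1" using sublist_length_le by fastforce
    then show False using Zlen that by fastforce
  qed
  ultimately show ?thesis unfolding Bset_def arr_def by auto
qed

lemma B_valid: "d \<in> B \<Longrightarrow> valid d" unfolding Bset_def by auto

lemma psrc_B: "d \<in> B \<Longrightarrow> psrc d \<in> Q0"
  unfolding Bset_def valid_path_def psrc_def by auto

end

lemma pt_apply: "pt p q = (if q = p then 1 else 0)"
  by (simp add: pt_def)

context quiv begin

abbreviation lm :: "(('v,'a) path \<Rightarrow> 'k::field) \<Rightarrow> (('v,'a) path \<Rightarrow> 'k) \<Rightarrow> (('v,'a) path \<Rightarrow> 'k)"
  where "lm x y \<equiv> lam_mult B tgt x y"

definition M :: "('v,'a) path \<Rightarrow> ('v,'a) path \<Rightarrow> ('v,'a) path \<Rightarrow> 'k::field" where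
  "M be al d = (if d \<in> B \<and> ptgt tgt al = psrc be \<and> pcat be al = d then 1 else 0)"

lemma lm_expand: "lm x y d = (\<Sum>be\<in>B. \<Sum>al\<in>B. x be * y al * M be al d)"
proof (cases "d \<in> B")
  case False then show ?thesis by (simp add: lam_mult_def M_def)
next
  case True
  let ?P = "\<lambda>p. ptgt tgt (snd p) = psrc (fst p) \<and> pcat (fst p) (snd p) = d"
  have S: "{(be, al). be \<in> B \<and> al \<in> B \<and> ptgt tgt al = psrc be \<and> pcat be al = d}
           = {p \<in> B \<times> B. ?P p}" by auto
  have "lm x y d = (\<Sum>p\<in>{p \<in> B \<times> B. ?P p}. (\<lambda>(be, al). x be * y al) p)"
    using True by (simp add: lam_mult_def S)
  also have "\<dots> = (\<Sum>p\<in>B \<times> B. if ?P p then (\<lambda>(be, al). x be * y al) p else 0)"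
    by (rule sum.inter_filter) (simp add: finB)
  also have "\<dots> = (\<Sum>(be,al)\<in>B \<times> B. x be * y al * M be al d)"
    using True by (intro sum.cong) (auto simp: M_def)
  also have "\<dots> = (\<Sum>be\<in>B. \<Sum>al\<in>B. x be * y al * M be al d)"
    by (simp add: sum.cartesian_product)
  finally show ?thesis .
qed

lemma M_out1: "be \<notin> B \<Longrightarrow> M be al d = 0"
  using B_split[of be al] by (auto simp: M_def)
lemma M_out2: "al \<notin> B \<Longrightarrow> M be al d = 0"
  using B_split[of be al] by (auto simp: M_def)

lemma sum_pt: "finite A \<Longrightarrow> (\<Sum>q\<in>A. pt p q * f q) = (if p \<in> A then f p else 0)"
  by (simp add: pt_apply if_distrib[where f = "\<lambda>z. z * _"] sum.delta cong: if_cong)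

lemma lm_pt_left: "lm (pt be) y d = (\<Sum>al\<in>B. y al * M be al d)"
proof -
  have "lm (pt be) y d = (\<Sum>bea\<in>B. pt be bea * (\<Sum>al\<in>B. y al * M bea al d))"
    unfolding lm_expand by (simp add: sum_distrib_left mult.assoc)
  also have "\<dots> = (if be \<in> B then (\<Sum>al\<in>B. y al * M be al d) else 0)"
    by (rule sum_pt[OF finB])
  also have "\<dots> = (\<Sum>al\<in>B. y al * M be al d)"
    by (cases "be \<in> B") (auto simp: M_out1)
  finally show ?thesis .
qed

lemma lm_pt_right: "lm x (pt al) d = (\<Sum>be\<in>B. x be * M be al d)"
proof -
  have "lm x (pt al) d = (\<Sum>be\<in>B. x be * (\<Sum>ala\<in>B. pt al ala * M be ala d))"
    unfolding lm_expand by (simp add: sum_distrib_left mult.assoc mult.left_commute)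
  also have "\<dots> = (\<Sum>be\<in>B. x be * (if al \<in> B then M be al d else 0))"
    by (simp add: sum_pt[OF finB])
  also have "\<dots> = (\<Sum>be\<in>B. x be * M be al d)"
    by (cases "al \<in> B") (auto simp: M_out2)
  finally show ?thesis .
qed

lemma lm_pt_pt: "lm (pt be) (pt al) d = M be al d"
  unfolding lm_pt_right by (simp add: sum_pt[OF finB] M_out1)

lemma lm_basis: "lm (pt be) (pt al) = (if ptgt tgt al = psrc be \<and> pcat be al \<in> B then pt (pcat be al) else (\<lambda>_. 0))"
  by (rule ext) (auto simp: lm_pt_pt M_def pt_apply)

lemma lm_cong:
  assumes "\<And>d. d \<in> B \<Longrightarrow> x d = x' d" "\<And>d. d \<in> B \<Longrightarrow> y d = y' d"
  shows "lm x y = lm x' y'"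
  by (rule ext) (simp add: lm_expand assms)

lemma lm_exp_left: "lm x y d = (\<Sum>be\<in>B. x be * lm (pt be) y d)"
  by (simp only: lm_pt_left) (simp add: lm_expand sum_distrib_left mult.assoc)

lemma lm_exp_right: "lm x y d = (\<Sum>al\<in>B. y al * lm x (pt al) d)"
proof -
  have "(\<Sum>al\<in>B. y al * lm x (pt al) d) = (\<Sum>al\<in>B. \<Sum>be\<in>B. x be * y al * M be al d)"
    by (simp only: lm_pt_right sum_distrib_left) (simp add: mult.assoc mult.left_commute)
  also have "\<dots> = (\<Sum>be\<in>B. \<Sum>al\<in>B. x be * y al * M be al d)"
    by (rule sum.swap)
  finally show ?thesis by (simp add: lm_expand)
qed

lemma lm_lin_left:
  assumes "finite I"
  shows "lm (\<lambda>q. \<Sum>i\<in>I. c i * f i q) y d = (\<Sum>i\<in>I. c i * lm (f i) y d)"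
proof -
  have "lm (\<lambda>q. \<Sum>i\<in>I. c i * f i q) y d = (\<Sum>be\<in>B. \<Sum>al\<in>B. \<Sum>i\<in>I. c i * (f i be * y al * M be al d))"
    unfolding lm_expand by (simp add: sum_distrib_right sum_distrib_left mult.assoc)
  also have "\<dots> = (\<Sum>i\<in>I. c i * (\<Sum>be\<in>B. \<Sum>al\<in>B. f i be * y al * M be al d))"
    by (simp only: sum_distrib_left sum.swap[where A = I])
  finally show ?thesis unfolding lm_expand .
qed

lemma lm_lin_right:
  assumes "finite I"
  shows "lm x (\<lambda>q. \<Sum>i\<in>I. c i * f i q) d = (\<Sum>i\<in>I. c i * lm x (f i) d)"
proof -
  have "lm x (\<lambda>q. \<Sum>i\<in>I. c i * f i q) d = (\<Sum>be\<in>B. \<Sum>al\<in>B. \<Sum>i\<in>I. c i * (x be * f i al * M be al d))"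
    unfolding lm_expand by (simp add: sum_distrib_right sum_distrib_left mult.assoc mult.left_commute)
  also have "\<dots> = (\<Sum>i\<in>I. c i * (\<Sum>be\<in>B. \<Sum>al\<in>B. x be * f i al * M be al d))"
    by (simp only: sum_distrib_left sum.swap[where A = I])
  finally show ?thesis unfolding lm_expand .
qed

lemma lm_add_left: "lm (\<lambda>q. x q + x' q) y d = lm x y d + lm x' y d"
  unfolding lm_expand by (simp add: sum.distrib algebra_simps)
lemma lm_add_right: "lm x (\<lambda>q. y q + y' q) d = lm x y d + lm x y' d"
  unfolding lm_expand by (simp add: sum.distrib algebra_simps)
lemma lm_diff_left: "lm (\<lambda>q. x q - x' q) y d = lm x y d - lm x' y d"
  unfolding lm_expand by (simp add: sum_subtractf algebra_simps)
lemma lm_diff_right: "lm x (\<lambda>q. y q - y' q) d = lm x y d - lm x y' d"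
  unfolding lm_expand by (simp add: sum_subtractf algebra_simps)
lemma lm_scale_left: "lm (\<lambda>q. c * x q) y d = c * lm x y d"
  unfolding lm_expand by (simp add: sum_distrib_left algebra_simps)
lemma lm_scale_right: "lm x (\<lambda>q. c * y q) d = c * lm x y d"
  unfolding lm_expand by (simp add: sum_distrib_left algebra_simps)
lemma lm_neg_left: "lm (\<lambda>q. - x q) y d = - lm x y d"
  unfolding lm_expand by (simp add: sum_negf algebra_simps)
lemma lm_neg_right: "lm x (\<lambda>q. - y q) d = - lm x y d"
  unfolding lm_expand by (simp add: sum_negf algebra_simps)
lemma lm_zero_left: "lm (\<lambda>q. 0) y d = 0"
  unfolding lm_expand by simp
lemma lm_zero_right: "lm x (\<lambda>q. 0) d = 0"
  unfolding lm_expand by simp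

end

context quiv begin

lemma lm_zero_left_fun: "lm (\<lambda>q. 0) y = (\<lambda>_. 0)"
  by (rule ext) (rule lm_zero_left)
lemma lm_zero_right_fun: "lm x (\<lambda>q. 0) = (\<lambda>_. 0)"
  by (rule ext) (rule lm_zero_right)

lemma lm_basis_assoc:
  "(lm (lm (pt be) (pt al)) (pt c) :: ('v,'a) path \<Rightarrow> 'k::field) = lm (pt be) (lm (pt al) (pt c))"
proof -
  let ?P = "ptgt tgt al = psrc be \<and> ptgt tgt c = psrc al \<and> pcat be (pcat al c) \<in> B"
  have L: "(lm (lm (pt be) (pt al)) (pt c) :: ('v,'a) path \<Rightarrow> 'k) = (if ?P then pt (pcat be (pcat al c)) else (\<lambda>_. 0))"
  proof (cases ?P)
    case True
    then have "pcat be al \<in> B" using B_split[of "pcat be al" c] by (simp add: pcat_assoc)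
    with True show ?thesis by (simp add: lm_basis pcat_assoc)
  next
    case False
    show ?thesis
    proof (cases "ptgt tgt al = psrc be \<and> pcat be al \<in> B")
      case True
      then show ?thesis using False by (auto simp: lm_basis pcat_assoc)
    next
      case F2: False
      have Z: "lm (pt be) (pt al) = (\<lambda>_. 0)" using F2 unfolding lm_basis by auto
      show ?thesis using False by (simp only: Z lm_zero_left_fun) simp
    qed
  qed
  have R: "(lm (pt be) (lm (pt al) (pt c)) :: ('v,'a) path \<Rightarrow> 'k) = (if ?P then pt (pcat be (pcat al c)) else (\<lambda>_. 0))"
  proof (cases ?P)
    case True
    then have "pcat al c \<in> B" using B_split[of be "pcat al c"] ptgt_pcat[of c al] by simp
    with True show ?thesis by (simp add: lm_basis ptgt_pcat)
  next
    case False
    show ?thesis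
    proof (cases "ptgt tgt c = psrc al \<and> pcat al c \<in> B")
      case True
      then show ?thesis using False by (auto simp: lm_basis ptgt_pcat)
    next
      case F2: False
      have Z: "lm (pt al) (pt c) = (\<lambda>_. 0)" using F2 unfolding lm_basis by auto
      show ?thesis using False by (simp only: Z lm_zero_right_fun) simp
    qed
  qed
  show ?thesis using L R by simp
qed

lemma lm_exp_left_fun: "lm x y = (\<lambda>q. \<Sum>be\<in>B. x be * lm (pt be) y q)"
  by (rule ext) (rule lm_exp_left)
lemma lm_exp_right_fun: "lm x y = (\<lambda>q. \<Sum>al\<in>B. y al * lm x (pt al) q)"
  by (rule ext) (rule lm_exp_right)

lemma lm_assoc: "lm (lm x y) z = lm x (lm y z)"
proof (rule ext)
  fix d
  have "lm (lm x y) z d = lm (\<lambda>q. \<Sum>be\<in>B. x be * lm (pt be) y q) z d"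
    by (subst lm_exp_left_fun[of x y]) simp
  also have "\<dots> = (\<Sum>be\<in>B. x be * lm (lm (pt be) y) z d)"
    by (rule lm_lin_left[OF finB])
  also have "\<dots> = (\<Sum>be\<in>B. x be * (\<Sum>al\<in>B. y al * (\<Sum>c\<in>B. z c * lm (lm (pt be) (pt al)) (pt c) d)))"
  proof (rule sum.cong[OF refl])
    fix be
    have "lm (lm (pt be) y) z d = lm (\<lambda>q. \<Sum>al\<in>B. y al * lm (pt be) (pt al) q) z d"
      by (subst lm_exp_right_fun[of "pt be" y]) simp
    also have "\<dots> = (\<Sum>al\<in>B. y al * lm (lm (pt be) (pt al)) z d)"
      by (rule lm_lin_left[OF finB])
    also have "\<dots> = (\<Sum>al\<in>B. y al * (\<Sum>c\<in>B. z c * lm (lm (pt be) (pt al)) (pt c) d))"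
      by (rule sum.cong[OF refl]) (simp add: lm_exp_right[of _ z])
    finally show "x be * lm (lm (pt be) y) z d = x be * (\<Sum>al\<in>B. y al * (\<Sum>c\<in>B. z c * lm (lm (pt be) (pt al)) (pt c) d))"
      by simp
  qed
  also have "\<dots> = (\<Sum>be\<in>B. x be * (\<Sum>al\<in>B. y al * (\<Sum>c\<in>B. z c * lm (pt be) (lm (pt al) (pt c)) d)))"
    by (simp add: lm_basis_assoc)
  also have "\<dots> = lm x (lm y z) d"
  proof -
    have "lm x (lm y z) d = (\<Sum>be\<in>B. x be * lm (pt be) (lm y z) d)"
      by (rule lm_exp_left)
    also have "\<dots> = (\<Sum>be\<in>B. x be * (\<Sum>al\<in>B. y al * (\<Sum>c\<in>B. z c * lm (pt be) (lm (pt al) (pt c)) d)))"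
    proof (rule sum.cong[OF refl])
      fix be
      have "lm (pt be) (lm y z) d = lm (pt be) (\<lambda>q. \<Sum>al\<in>B. y al * lm (pt al) z q) d"
        by (subst lm_exp_left_fun[of y z]) simp
      also have "\<dots> = (\<Sum>al\<in>B. y al * lm (pt be) (lm (pt al) z) d)"
        by (rule lm_lin_right[OF finB])
      also have "\<dots> = (\<Sum>al\<in>B. y al * (\<Sum>c\<in>B. z c * lm (pt be) (lm (pt al) (pt c)) d))"
      proof (rule sum.cong[OF refl])
        fix al
        have "lm (pt be) (lm (pt al) z) d = lm (pt be) (\<lambda>q. \<Sum>c\<in>B. z c * lm (pt al) (pt c) q) d"
          by (subst lm_exp_right_fun[of "pt al" z]) simp
        also have "\<dots> = (\<Sum>c\<in>B. z c * lm (pt be) (lm (pt al) (pt c)) d)"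
          by (rule lm_lin_right[OF finB])
        finally show "y al * lm (pt be) (lm (pt al) z) d = y al * (\<Sum>c\<in>B. z c * lm (pt be) (lm (pt al) (pt c)) d)"
          by simp
      qed
      finally show "x be * lm (pt be) (lm y z) d = x be * (\<Sum>al\<in>B. y al * (\<Sum>c\<in>B. z c * lm (pt be) (lm (pt al) (pt c)) d))"
        by simp
    qed
    finally show ?thesis by simp
  qed
  finally show "lm (lm x y) z d = lm x (lm y z) d" .
qed

lemma lm_vtx_left:
  assumes "e \<in> Q0"
  shows "lm (pt (e, [])) x d = (if d \<in> B \<and> ptgt tgt d = e then x d else 0)"
proof -
  have Mx: "M (e, []) al d = (if al = d then (if d \<in> B \<and> ptgt tgt d = e then 1 else 0) else 0)" for al :: "('v,'a) path"
    by (auto simp: M_def psrc_def pcat_def)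
  show ?thesis
    by (simp add: lm_pt_left Mx if_distrib[where f = "\<lambda>z. _ * z"] sum.delta finB cong: if_cong)
qed

lemma lm_vtx_right:
  assumes "e \<in> Q0"
  shows "lm x (pt (e, [])) d = (if d \<in> B \<and> psrc d = e then x d else 0)"
proof -
  have Mx: "M be (e, []) d = (if be = d then (if d \<in> B \<and> psrc d = e then 1 else 0) else 0)" for be :: "('v,'a) path"
    by (cases be; cases d) (auto simp: M_def psrc_def pcat_def ptgt_def)
  show ?thesis
    by (simp add: lm_pt_right Mx if_distrib[where f = "\<lambda>z. _ * z"] sum.delta finB cong: if_cong)
qed

lemma lm_in_lam: "lm x y \<in> lam_space B"
  by (simp add: lam_space_def lam_mult_def)

definition Diag :: "(('v,'a) path \<Rightarrow> 'k::field) set" where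
  "Diag = {x \<in> lam_space B. \<forall>d. x d \<noteq> 0 \<longrightarrow> psrc d = ptgt tgt d}"

lemma Diag_vtx_comm:
  assumes "x \<in> Diag" "e \<in> Q0"
  shows "lm (pt (e, [])) x = lm x (pt (e, []))"
  using assms unfolding fun_eq_iff lm_vtx_left[OF assms(2)] lm_vtx_right[OF assms(2)] Diag_def
  by (metis (mono_tags, lifting) mem_Collect_eq)

lemma E_expand:
  fixes u :: "('v,'a) path \<Rightarrow> 'k::field"
  assumes "u \<in> E_space B" "d \<in> B"
  shows "u d = (\<Sum>e\<in>Q0. u (e, []) * pt (e, []) d)"
proof (cases "snd d = []")
  case True
  then obtain v where d: "d = (v, [])" by (cases d) simp
  have v: "v \<in> Q0" using assms(2) d unfolding Bset_def valid_path_def by auto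
  have "(\<Sum>e\<in>Q0. u (e, []) * pt (e, []) d) = (\<Sum>e\<in>Q0. if v = e then u (e, []) else 0)"
    by (rule sum.cong) (auto simp: d pt_apply)
  also have "\<dots> = u d" using v d by (simp add: finQ0)
  finally show ?thesis by simp
next
  case False
  then have "u d = 0" using assms(1) unfolding E_space_def by (cases d) auto
  moreover have "(pt (e, []) d :: 'k) = 0" for e :: 'v using False by (auto simp: pt_apply)
  ultimately show ?thesis by simp
qed

end

context quiv begin

abbreviation ad :: "(('v,'a) path \<Rightarrow> 'k::field) \<Rightarrow> (('v,'a) path \<Rightarrow> 'k) \<Rightarrow> (('v,'a) path \<Rightarrow> 'k)"
  where "ad x \<equiv> ad_map B tgt x"

lemma lm_add_left_fun: "lm (\<lambda>q. x q + x' q) y = (\<lambda>d. lm x y d + lm x' y d)"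
  by (rule ext) (rule lm_add_left)
lemma lm_add_right_fun: "lm x (\<lambda>q. y q + y' q) = (\<lambda>d. lm x y d + lm x y' d)"
  by (rule ext) (rule lm_add_right)
lemma lm_diff_left_fun: "lm (\<lambda>q. x q - x' q) y = (\<lambda>d. lm x y d - lm x' y d)"
  by (rule ext) (rule lm_diff_left)
lemma lm_diff_right_fun: "lm x (\<lambda>q. y q - y' q) = (\<lambda>d. lm x y d - lm x y' d)"
  by (rule ext) (rule lm_diff_right)
lemma lm_scale_left_fun: "lm (\<lambda>q. c * x q) y = (\<lambda>d. c * lm x y d)"
  by (rule ext) (rule lm_scale_left)
lemma lm_scale_right_fun: "lm x (\<lambda>q. c * y q) = (\<lambda>d. c * lm x y d)"
  by (rule ext) (rule lm_scale_right)
lemma lm_neg_left_fun: "lm (\<lambda>q. - x q) y = (\<lambda>d. - lm x y d)"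
  by (rule ext) (rule lm_neg_left)
lemma lm_neg_right_fun: "lm x (\<lambda>q. - y q) = (\<lambda>d. - lm x y d)"
  by (rule ext) (rule lm_neg_right)

lemmas lm_lin_fun = lm_add_left_fun lm_add_right_fun lm_diff_left_fun lm_diff_right_fun
  lm_scale_left_fun lm_scale_right_fun lm_neg_left_fun lm_neg_right_fun lm_zero_left_fun lm_zero_right_fun

lemma lam_add: "x \<in> lam_space B \<Longrightarrow> y \<in> lam_space B \<Longrightarrow> (\<lambda>d. x d + y d) \<in> lam_space B"
  by (simp add: lam_space_def)
lemma lam_diff: "x \<in> lam_space B \<Longrightarrow> y \<in> lam_space B \<Longrightarrow> (\<lambda>d. x d - y d) \<in> lam_space B"
  by (simp add: lam_space_def)
lemma lam_scale: "x \<in> lam_space B \<Longrightarrow> (\<lambda>d. c * x d) \<in> lam_space B"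
  by (simp add: lam_space_def)
lemma lam_neg: "x \<in> lam_space B \<Longrightarrow> (\<lambda>d. - x d) \<in> lam_space B"
  by (simp add: lam_space_def)
lemma lam_zero: "(\<lambda>d. 0) \<in> lam_space B"
  by (simp add: lam_space_def)
lemma lam_pt: "d \<in> B \<Longrightarrow> pt d \<in> lam_space B"
  by (auto simp: lam_space_def pt_apply)

lemma lm_support:
  fixes x y :: "('v,'a) path \<Rightarrow> 'k::field"
  assumes "lm x y d \<noteq> 0"
  shows "\<exists>be al. be \<in> B \<and> al \<in> B \<and> x be \<noteq> 0 \<and> y al \<noteq> 0 \<and> ptgt tgt al = psrc be \<and> pcat be al = d \<and> d \<in> B"
proof -
  from assms obtain be where be: "be \<in> B" "(\<Sum>al\<in>B. x be * y al * M be al d) \<noteq> 0"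
    unfolding lm_expand by (meson sum.not_neutral_contains_not_neutral)
  then obtain al where al: "al \<in> B" "x be * y al * M be al d \<noteq> 0"
    by (meson sum.not_neutral_contains_not_neutral)
  have "M be al d \<noteq> (0::'k)" "x be \<noteq> 0" "y al \<noteq> 0" using al(2) by auto
  then have "d \<in> B \<and> ptgt tgt al = psrc be \<and> pcat be al = d" by (simp add: M_def split: if_splits)
  then show ?thesis using be al \<open>x be \<noteq> 0\<close> \<open>y al \<noteq> 0\<close> by blast
qed

lemma lm_supportE:
  fixes x y :: "('v,'a) path \<Rightarrow> 'k::field"
  assumes "lm x y d \<noteq> 0"
  obtains be al where "be \<in> B" "al \<in> B" "x be \<noteq> 0" "y al \<noteq> 0" "ptgt tgt al = psrc be" "pcat be al = d" "d \<in> B"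
  using lm_support[OF assms] by (elim exE conjE) simp

lemma Diag_cyc: "x \<in> Diag \<Longrightarrow> x d \<noteq> 0 \<Longrightarrow> psrc d = ptgt tgt d"
  unfolding Diag_def by blast

lemma Diag_lam: "x \<in> Diag \<Longrightarrow> x \<in> lam_space B" by (simp add: Diag_def)

lemma Diag_add: "x \<in> Diag \<Longrightarrow> y \<in> Diag \<Longrightarrow> (\<lambda>d. x d + y d) \<in> Diag"
  unfolding Diag_def lam_space_def by (auto, metis add.right_neutral)
lemma Diag_diff: "x \<in> Diag \<Longrightarrow> y \<in> Diag \<Longrightarrow> (\<lambda>d. x d - y d) \<in> Diag"
  unfolding Diag_def lam_space_def by (auto, metis diff_zero)
lemma Diag_scale: "x \<in> Diag \<Longrightarrow> (\<lambda>d. c * x d) \<in> Diag"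
  unfolding Diag_def lam_space_def by auto
lemma Diag_neg: "x \<in> Diag \<Longrightarrow> (\<lambda>d. - x d) \<in> Diag"
  unfolding Diag_def lam_space_def by auto
lemma Diag_mult: "x \<in> Diag \<Longrightarrow> y \<in> Diag \<Longrightarrow> lm x y \<in> Diag"
proof -
  assume x: "x \<in> Diag" and y: "y \<in> Diag"
  have "psrc d = ptgt tgt d" if ne: "lm x y d \<noteq> 0" for d
  proof -
    obtain be al where *: "x be \<noteq> 0" "y al \<noteq> 0" "ptgt tgt al = psrc be" "pcat be al = d"
      using lm_support[OF ne] by blast
    have "psrc be = ptgt tgt be" "psrc al = ptgt tgt al" using Diag_cyc[OF x] Diag_cyc[OF y] * by auto
    then show ?thesis using * ptgt_pcat[of al be] by auto
  qed
  then show ?thesis unfolding Diag_def using lm_in_lam by auto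
qed

lemma psrc_arr[simp]: "psrc (arr src b) = src b" by (simp add: psrc_def arr_def)
lemma ptgt_arr[simp]: "ptgt tgt (arr src b) = tgt b" by (simp add: ptgt_def arr_def)

lemma Q1B_I: "b \<in> Q1 \<Longrightarrow> g \<in> B \<Longrightarrow> psrc g = src b \<Longrightarrow> ptgt tgt g = tgt b \<Longrightarrow> (arr src b, g) \<in> Q1B Q1 src tgt B"
  unfolding Q1B_def by blast

lemma comm_arr_support:
  fixes x :: "('v,'a) path \<Rightarrow> 'k::field"
  assumes x: "x \<in> Diag" and b: "b \<in> Q1"
    and ne: "lm (pt (arr src b)) x d - lm x (pt (arr src b)) d \<noteq> 0"
  shows "(arr src b, d) \<in> Q1B Q1 src tgt B"
proof (cases "lm (pt (arr src b)) x d = 0")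
  case False
  obtain be al where *: "be \<in> B" "al \<in> B" "pt (arr src b) be \<noteq> (0::'k)" "x al \<noteq> 0" "ptgt tgt al = psrc be" "pcat be al = d" "d \<in> B"
    by (rule lm_supportE[OF False])
  have be: "be = arr src b" using *(3) by (auto simp: pt_apply split: if_splits)
  have al: "psrc al = ptgt tgt al" using Diag_cyc[OF x *(4)] .
  have "psrc d = src b" using *(5,6) al be by auto
  moreover have "ptgt tgt d = tgt b" using ptgt_pcat[OF *(5)] *(6) be by simp
  ultimately show ?thesis using Q1B_I[OF b *(7)] by simp
next
  case True
  then have ne2: "lm x (pt (arr src b)) d \<noteq> 0" using ne by auto
  obtain be al where *: "be \<in> B" "al \<in> B" "x be \<noteq> 0" "pt (arr src b) al \<noteq> (0::'k)" "ptgt tgt al = psrc be" "pcat be al = d" "d \<in> B"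
    by (rule lm_supportE[OF ne2])
  have al: "al = arr src b" using *(4) by (auto simp: pt_apply split: if_splits)
  have be: "psrc be = ptgt tgt be" using Diag_cyc[OF x *(3)] .
  have "psrc d = src b" using *(6) al by auto
  moreover have "ptgt tgt d = tgt b" using ptgt_pcat[OF *(5)] *(5,6) be al by simp
  ultimately show ?thesis using Q1B_I[OF b *(7)] by simp
qed

lemma Diag_E_comm:
  assumes w: "w \<in> Diag" and u: "u \<in> E_space B"
  shows "lm w u = lm u w"
proof -
  let ?U = "\<lambda>q. \<Sum>e\<in>Q0. u (e, []) * pt (e, []) q"
  have "lm w u = lm w ?U" by (rule lm_cong) (simp_all add: E_expand[OF u])
  also have "\<dots> = (\<lambda>d. \<Sum>e\<in>Q0. u (e, []) * lm w (pt (e, [])) d)"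
    by (rule ext) (rule lm_lin_right[OF finQ0])
  also have "\<dots> = (\<lambda>d. \<Sum>e\<in>Q0. u (e, []) * lm (pt (e, [])) w d)"
    using Diag_vtx_comm[OF w] by simp
  also have "\<dots> = lm ?U w"
    by (rule ext) (rule lm_lin_left[OF finQ0, symmetric])
  also have "\<dots> = lm u w" by (rule lm_cong) (simp_all add: E_expand[OF u])
  finally show ?thesis .
qed

lemma Diag_E_derivation:
  fixes w :: "('v,'a) path \<Rightarrow> 'k::field"
  assumes w: "w \<in> Diag"
  shows "is_E_derivation B tgt (ad w)"
  unfolding is_E_derivation_def
proof (intro conjI ballI allI)
  fix x :: "('v,'a) path \<Rightarrow> 'k" assume x: "x \<in> lam_space B"
  show "ad w x \<in> lam_space B" using x by (simp add: ad_map_def lam_diff lm_in_lam)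
next
  fix x y :: "('v,'a) path \<Rightarrow> 'k" assume x: "x \<in> lam_space B" and y: "y \<in> lam_space B"
  show "ad w (\<lambda>d. x d + y d) = (\<lambda>d. ad w x d + ad w y d)"
    using x y by (simp add: ad_map_def lam_add lm_lin_fun fun_eq_iff algebra_simps)
next
  fix c :: 'k and x :: "('v,'a) path \<Rightarrow> 'k" assume x: "x \<in> lam_space B"
  show "ad w (\<lambda>d. c * x d) = (\<lambda>d. c * ad w x d)"
    using x by (simp add: ad_map_def lam_scale lm_lin_fun fun_eq_iff algebra_simps)
next
  fix x y :: "('v,'a) path \<Rightarrow> 'k" assume x: "x \<in> lam_space B" and y: "y \<in> lam_space B"
  show "ad w (lm x y) = (\<lambda>d. lm (ad w x) y d + lm x (ad w y) d)"
    using x y by (simp add: ad_map_def lm_in_lam lm_lin_fun lm_assoc fun_eq_iff algebra_simps)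
next
  fix u w' x :: "('v,'a) path \<Rightarrow> 'k" assume u: "u \<in> E_space B" and w': "w' \<in> E_space B" and x: "x \<in> lam_space B"
  have c1: "lm w u = lm u w" by (rule Diag_E_comm[OF w u])
  have c2: "lm w w' = lm w' w" by (rule Diag_E_comm[OF w w'])
  have "lm w (lm u (lm x w')) = lm u (lm (lm w x) w')"
    by (metis c1 lm_assoc)
  moreover have "lm (lm u (lm x w')) w = lm u (lm (lm x w) w')"
    by (metis c2 lm_assoc)
  ultimately show "ad w (lm u (lm x w')) = lm u (lm (ad w x) w')"
    using x by (simp add: ad_map_def lm_in_lam lm_lin_fun fun_eq_iff)
qed

lemma ad_add: "ad (\<lambda>d. a d + b d) = (\<lambda>y d. ad a y d + ad b y d)"
  by (simp add: ad_map_def lm_lin_fun fun_eq_iff algebra_simps)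
lemma ad_neg: "ad (\<lambda>d. - a d) = (\<lambda>y d. - ad a y d)"
  by (simp add: ad_map_def lm_lin_fun fun_eq_iff algebra_simps)
lemma ad_scale: "ad (\<lambda>d. c * a d) = (\<lambda>y d. c * ad a y d)"
  by (simp add: ad_map_def lm_lin_fun fun_eq_iff algebra_simps)
lemma ad_diff: "ad (\<lambda>d. a d - b d) = (\<lambda>y d. ad a y d - ad b y d)"
  by (simp add: ad_map_def lm_lin_fun fun_eq_iff algebra_simps)

lemma comm_ad: "comm_bracket (ad a) (ad b) = ad (\<lambda>d. lm a b d - lm b a d)"
proof (rule ext)+
  fix y d
  show "comm_bracket (ad a) (ad b) y d = ad (\<lambda>d. lm a b d - lm b a d) y d"
  proof (cases "y \<in> lam_space B")
    case True
    then show ?thesis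
      by (simp add: comm_bracket_def ad_map_def lam_diff lm_in_lam lm_lin_fun lm_assoc algebra_simps)
  next
    case False
    then show ?thesis
      by (simp add: comm_bracket_def ad_map_def lam_zero lm_lin_fun)
  qed
qed

lemma valid_snoc_ptgt:
  assumes "valid (v, as @ [b])"
  shows "ptgt tgt (v, as) = src b"
proof (cases "as = []")
  case True then show ?thesis using assms by (simp add: valid_path_def ptgt_def)
next
  case False
  have "tgt ((as @ [b]) ! (length as - 1)) = src ((as @ [b]) ! Suc (length as - 1))"
    using assms False unfolding valid_path_def by simp
  then show ?thesis using False by (simp add: ptgt_def nth_append last_conv_nth)
qed

lemma central:
  assumes z: "z \<in> Diag"
    and arrc: "\<And>b. b \<in> Q1 \<Longrightarrow> lm (pt (arr src b)) z = lm z (pt (arr src b))"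
  shows "lm z y = lm y z"
proof -
  have step: "\<forall>v. (v, as) \<in> B \<longrightarrow> lm z (pt (v, as)) = lm (pt (v, as)) z" for as
  proof (induction as rule: rev_induct)
    case Nil
    show ?case
    proof (intro allI impI)
      fix v assume "(v, []) \<in> B"
      then have "v \<in> Q0" unfolding Bset_def valid_path_def by auto
      then show "lm z (pt (v, [])) = lm (pt (v, [])) z" using Diag_vtx_comm[OF z] by simp
    qed
  next
    case (snoc b as)
    show ?case
    proof (intro allI impI)
      fix v assume d: "(v, as @ [b]) \<in> B"
      have c: "ptgt tgt (v, as) = psrc (arr src b)"
        using valid_snoc_ptgt[OF B_valid[OF d]] by simp
      have pc: "pcat (arr src b) (v, as) = (v, as @ [b])" by (simp add: pcat_def arr_def)
      have vB: "(v, as) \<in> B" using B_split[of "arr src b" "(v, as)"] d c pc by simp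
      have bQ: "b \<in> Q1" using B_valid[OF d] unfolding valid_path_def by auto
      have e: "pt (v, as @ [b]) = lm (pt (arr src b)) (pt (v, as))"
        using c pc d by (simp add: lm_basis)
      have IH: "lm z (pt (v, as)) = lm (pt (v, as)) z" using snoc vB by blast
      have "lm z (pt (v, as @ [b])) = lm (lm z (pt (arr src b))) (pt (v, as))"
        by (simp add: e lm_assoc)
      also have "\<dots> = lm (pt (arr src b)) (lm z (pt (v, as)))"
        by (metis arrc[OF bQ] lm_assoc)
      also have "\<dots> = lm (pt (v, as @ [b])) z"
        by (simp add: IH e lm_assoc)
      finally show "lm z (pt (v, as @ [b])) = lm (pt (v, as @ [b])) z" .
    qed
  qed
  have "lm z (pt al) = lm (pt al) z" if "al \<in> B" for al
    using step[of "snd al"] that by (cases al) auto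
  then show ?thesis
    by (intro ext) (simp add: lm_exp_right[of z y] lm_exp_left[of y z])
qed

end

context quiv begin

abbreviation "QB0 \<equiv> Q0B Q0 tgt B"
abbreviation "QB1 \<equiv> Q1B Q1 src tgt B"

definition psiX :: "(('v,'a) path \<Rightarrow> 'k::field) \<Rightarrow> ('v,'a,'k) pvec" where
  "psiX x = (\<lambda>r. \<Sum>p\<in>QB0. x (snd p) * psi0 Q1 src tgt B p r)"

lemma Q0B_img: "QB0 = (\<lambda>al. ((psrc al, [] :: 'a list), al)) ` {al \<in> B. psrc al = ptgt tgt al}"
proof (rule set_eqI, rule iffI)
  fix p assume "p \<in> QB0"
  then obtain e g where p: "p = ((e, [] :: 'a list), g)" "e \<in> Q0" "g \<in> B" "psrc g = e" "ptgt tgt g = e"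
    unfolding Q0B_def by blast
  show "p \<in> (\<lambda>al. ((psrc al, [] :: 'a list), al)) ` {al \<in> B. psrc al = ptgt tgt al}"
    by (rule image_eqI[where x = g]) (use p in auto)
next
  fix p assume "p \<in> (\<lambda>al. ((psrc al, [] :: 'a list), al)) ` {al \<in> B. psrc al = ptgt tgt al}"
  then obtain g where p: "p = ((psrc g, [] :: 'a list), g)" "g \<in> B" "psrc g = ptgt tgt g" by blast
  show "p \<in> QB0" unfolding Q0B_def using p psrc_B[OF p(2)] by (intro CollectI exI[of _ "psrc g"] exI[of _ g]) auto
qed

lemma fin_Q0B: "finite QB0"
  unfolding Q0B_img using finB by simp

lemma Q0B_D: "p \<in> QB0 \<Longrightarrow> p = ((psrc (snd p), [] :: 'a list), snd p) \<and> snd p \<in> B \<and> psrc (snd p) = ptgt tgt (snd p)"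
  unfolding Q0B_def by auto

lemma fin_Q1B: "finite QB1"
proof -
  have "QB1 \<subseteq> (arr src ` Q1) \<times> B" unfolding Q1B_def by auto
  then show ?thesis using finB finQ1 finite_subset by blast
qed

lemma sum_Q0B:
  assumes x: "x \<in> Diag"
  shows "(\<Sum>al\<in>B. x al * F al) = (\<Sum>p\<in>QB0. x (snd p) * F (snd p))"
proof -
  let ?C = "{al \<in> B. psrc al = ptgt tgt al}"
  have "(\<Sum>p\<in>QB0. x (snd p) * F (snd p)) = (\<Sum>al\<in>?C. x al * F al)"
    unfolding Q0B_img by (subst sum.reindex) (auto simp: inj_on_def)
  also have "\<dots> = (\<Sum>al\<in>B. x al * F al)"
    by (rule sum.mono_neutral_left) (auto simp: finB dest: Diag_cyc[OF x])
  finally show ?thesis by simp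
qed

lemma arr_inj: "arr src a = arr src b \<longleftrightarrow> a = b"
  by (auto simp: arr_def)

lemma sum_ind: "finite A \<Longrightarrow> (\<Sum>a\<in>A. if a = b \<and> P a then 1 else 0) = (if b \<in> A \<and> P b then (1::'k::field) else 0)"
proof -
  assume f: "finite A"
  have "(\<Sum>a\<in>A. if a = b \<and> P a then 1 else 0) = (\<Sum>a\<in>A. if b = a then (if P b then 1 else 0) else (0::'k))"
    by (rule sum.cong) auto
  also have "\<dots> = (if b \<in> A \<and> P b then 1 else 0)" using f by simp
  finally show ?thesis .
qed

lemma psi0_arr:
  assumes b: "b \<in> Q1"
  shows "psi0 Q1 src tgt B p (arr src b, dl) =
    (if src b = fst (fst p) \<and> pcat (arr src b) (snd p) \<in> B \<and> dl = pcat (arr src b) (snd p) then 1 else 0)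
  - (if tgt b = fst (fst p) \<and> pcat (snd p) (arr src b) \<in> B \<and> dl = pcat (snd p) (arr src b) then (1::'k::field) else 0)"
proof -
  have f1: "finite {a \<in> Q1. src a = fst (fst p) \<and> pcat (arr src a) (snd p) \<in> B}" using finQ1 by simp
  have f2: "finite {a \<in> Q1. tgt a = fst (fst p) \<and> pcat (snd p) (arr src a) \<in> B}" using finQ1 by simp
  have e1: "(\<Sum>a\<in>{a \<in> Q1. src a = fst (fst p) \<and> pcat (arr src a) (snd p) \<in> B}.
          pt (arr src a, pcat (arr src a) (snd p)) (arr src b, dl)) =
        (\<Sum>a\<in>{a \<in> Q1. src a = fst (fst p) \<and> pcat (arr src a) (snd p) \<in> B}.
          if a = b \<and> dl = pcat (arr src a) (snd p) then 1 else (0::'k))"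
    by (rule sum.cong) (auto simp: pt_apply arr_inj)
  have e2: "(\<Sum>a\<in>{a \<in> Q1. tgt a = fst (fst p) \<and> pcat (snd p) (arr src a) \<in> B}.
          pt (arr src a, pcat (snd p) (arr src a)) (arr src b, dl)) =
        (\<Sum>a\<in>{a \<in> Q1. tgt a = fst (fst p) \<and> pcat (snd p) (arr src a) \<in> B}.
          if a = b \<and> dl = pcat (snd p) (arr src a) then 1 else (0::'k))"
    by (rule sum.cong) (auto simp: pt_apply arr_inj)
  show ?thesis
    unfolding psi0_def e1 e2 sum_ind[OF f1] sum_ind[OF f2] using b by auto
qed

lemma psi0_out:
  assumes p: "p \<in> QB0" and r: "r \<notin> QB1"
  shows "psi0 Q1 src tgt B p r = (0::'k::field)"
proof -
  obtain e g where pe: "p = ((e, [] :: 'a list), g)" "g \<in> B" "psrc g = e" "ptgt tgt g = e" "e \<in> Q0"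
    using p unfolding Q0B_def by auto
  have z1: "(pt (arr src a, pcat (arr src a) g) r :: 'k) = 0"
    if "a \<in> Q1" "src a = e" "pcat (arr src a) g \<in> B" for a
  proof -
    have "(arr src a, pcat (arr src a) g) \<in> QB1"
      by (rule Q1B_I) (use that pe ptgt_pcat[of g "arr src a"] in auto)
    then show ?thesis using r by (auto simp: pt_apply)
  qed
  have z2: "(pt (arr src a, pcat g (arr src a)) r :: 'k) = 0"
    if "a \<in> Q1" "tgt a = e" "pcat g (arr src a) \<in> B" for a
  proof -
    have "(arr src a, pcat g (arr src a)) \<in> QB1"
      by (rule Q1B_I) (use that pe ptgt_pcat[of "arr src a" g] in auto)
    then show ?thesis using r by (auto simp: pt_apply)
  qed
  show ?thesis unfolding psi0_def using pe z1 z2 by simp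
qed

lemma psiX_formula:
  fixes x :: "('v,'a) path \<Rightarrow> 'k::field"
  assumes x: "x \<in> Diag"
  shows "psiX x r = (if r \<in> QB1 then lm (pt (fst r)) x (snd r) - lm x (pt (fst r)) (snd r) else 0)"
proof (cases "r \<in> QB1")
  case False
  then show ?thesis unfolding psiX_def by (simp add: psi0_out[OF _ False])
next
  case True
  then obtain b dl where r: "r = (arr src b, dl)" "b \<in> Q1" "dl \<in> B" unfolding Q1B_def by auto
  let ?I1 = "\<lambda>g. if src b = ptgt tgt g \<and> pcat (arr src b) g \<in> B \<and> dl = pcat (arr src b) g then 1 else (0::'k)"
  let ?I2 = "\<lambda>g. if tgt b = psrc g \<and> pcat g (arr src b) \<in> B \<and> dl = pcat g (arr src b) then 1 else (0::'k)"
  have A: "psiX x r = (\<Sum>p\<in>QB0. x (snd p) * ?I1 (snd p)) - (\<Sum>p\<in>QB0. x (snd p) * ?I2 (snd p))"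
    unfolding psiX_def sum_subtractf[symmetric] r(1)
  proof (rule sum.cong[OF refl])
    fix p assume p: "p \<in> QB0"
    have "fst (fst p) = psrc (snd p)" "fst (fst p) = ptgt tgt (snd p)" using Q0B_D[OF p]
      by (metis fst_conv)+
    then show "x (snd p) * psi0 Q1 src tgt B p (arr src b, dl) = x (snd p) * ?I1 (snd p) - x (snd p) * ?I2 (snd p)"
      unfolding psi0_arr[OF r(2)] by (simp add: right_diff_distrib)
  qed
  have L: "lm (pt (arr src b)) x dl = (\<Sum>p\<in>QB0. x (snd p) * ?I1 (snd p))"
  proof -
    have "lm (pt (arr src b)) x dl = (\<Sum>al\<in>B. x al * M (arr src b) al dl)" by (rule lm_pt_left)
    also have "\<dots> = (\<Sum>p\<in>QB0. x (snd p) * M (arr src b) (snd p) dl)" by (rule sum_Q0B[OF x])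
    also have "\<dots> = (\<Sum>p\<in>QB0. x (snd p) * ?I1 (snd p))"
      by (rule sum.cong[OF refl]) (use r in \<open>auto simp: M_def\<close>)
    finally show ?thesis .
  qed
  have R: "lm x (pt (arr src b)) dl = (\<Sum>p\<in>QB0. x (snd p) * ?I2 (snd p))"
  proof -
    have "lm x (pt (arr src b)) dl = (\<Sum>al\<in>B. x al * M al (arr src b) dl)" by (rule lm_pt_right)
    also have "\<dots> = (\<Sum>p\<in>QB0. x (snd p) * M (snd p) (arr src b) dl)" by (rule sum_Q0B[OF x])
    also have "\<dots> = (\<Sum>p\<in>QB0. x (snd p) * ?I2 (snd p))"
      by (rule sum.cong[OF refl]) (use r in \<open>auto simp: M_def\<close>)
    finally show ?thesis .
  qed
  show ?thesis using True A L R r by simp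
qed

lemma Im_psi0_eq: "Im_psi0 Q0 Q1 src tgt B = (psiX ` Diag :: ('v,'a,'k::field) pvec set)"
proof
  show "Im_psi0 Q0 Q1 src tgt B \<subseteq> (psiX ` Diag :: ('v,'a,'k) pvec set)"
  proof
    fix u :: "('v,'a,'k) pvec" assume "u \<in> Im_psi0 Q0 Q1 src tgt B"
    then obtain c where u: "u = (\<lambda>q. \<Sum>p\<in>QB0. c p * psi0 Q1 src tgt B p q)"
      unfolding Im_psi0_def by auto
    define x where "x = (\<lambda>al. if al \<in> B \<and> psrc al = ptgt tgt al then c ((psrc al, [] :: 'a list), al) else 0)"
    have xD: "x \<in> Diag" unfolding Diag_def lam_space_def x_def by auto
    have "psiX x = u" unfolding u psiX_def
    proof (rule ext, rule sum.cong[OF refl])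
      fix q p assume p: "p \<in> QB0"
      then have "x (snd p) = c p" using Q0B_D[OF p] unfolding x_def by (metis (no_types, lifting))
      then show "x (snd p) * psi0 Q1 src tgt B p q = c p * psi0 Q1 src tgt B p q" by simp
    qed
    then show "u \<in> psiX ` Diag" using xD by blast
  qed
next
  show "(psiX ` Diag :: ('v,'a,'k) pvec set) \<subseteq> Im_psi0 Q0 Q1 src tgt B"
  proof
    fix u :: "('v,'a,'k) pvec" assume "u \<in> psiX ` Diag"
    then obtain x :: "('v,'a) path \<Rightarrow> 'k" where "u = psiX x" by blast
    then have "u = (\<lambda>q. \<Sum>p\<in>QB0. (\<lambda>p. x (snd p)) p * psi0 Q1 src tgt B p q)"
      by (simp add: psiX_def)
    then show "u \<in> Im_psi0 Q0 Q1 src tgt B" unfolding Im_psi0_def mem_Collect_eq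
      by (intro exI[of _ "\<lambda>p. x (snd p)"]) simp
  qed
qed

end

context quiv begin

definition pre :: "('v,'a) path \<Rightarrow> nat \<Rightarrow> ('v,'a) path" where
  "pre e i = (fst e, take i (snd e))"
definition suf :: "('v,'a) path \<Rightarrow> nat \<Rightarrow> ('v,'a) path" where
  "suf e i = (ptgt tgt (pre e i), drop i (snd e))"
definition cb :: "(('v,'a) path \<Rightarrow> 'k::field) \<Rightarrow> 'a \<Rightarrow> ('v,'a) path \<Rightarrow> 'k" where
  "cb x b = (\<lambda>d. lm (pt (arr src b)) x d - lm x (pt (arr src b)) d)"
definition G :: "'a \<Rightarrow> ('v,'a) path set" where
  "G b = {g. (arr src b, g) \<in> QB1}"

lemma G_sub: "G b \<subseteq> B" unfolding G_def Q1B_def by auto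
lemma fin_G: "finite (G b)" using G_sub finB finite_subset by blast

lemma G_D: "g \<in> G b \<Longrightarrow> g \<in> B \<and> psrc g = src b \<and> ptgt tgt g = tgt b \<and> b \<in> Q1"
  unfolding G_def Q1B_def by (auto simp: arr_inj)

lemma cb_expand:
  fixes y :: "('v,'a) path \<Rightarrow> 'k::field"
  assumes y: "y \<in> Diag" and b: "b \<in> Q1"
  shows "(\<Sum>g\<in>G b. cb y b g * pt g d) = cb y b d"
proof -
  have "(\<Sum>g\<in>G b. cb y b g * pt g d) = (\<Sum>g\<in>G b. if d = g then cb y b d else 0)"
    by (rule sum.cong) (auto simp: pt_apply)
  also have "\<dots> = (if d \<in> G b then cb y b d else 0)" using fin_G by simp
  also have "\<dots> = cb y b d"
    using comm_arr_support[OF y b, of d] by (auto simp: G_def cb_def)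
  finally show ?thesis .
qed

lemma fiber_sum:
  "(\<Sum>q\<in>QB1. if fst q = arr src b then F q else 0) = (\<Sum>g\<in>G b. F (arr src b, g))"
proof -
  have "(\<Sum>q\<in>QB1. if fst q = arr src b then F q else 0) = (\<Sum>q\<in>{q \<in> QB1. fst q = arr src b}. F q)"
    by (rule sum.inter_filter[symmetric]) (rule fin_Q1B)
  also have "{q \<in> QB1. fst q = arr src b} = (\<lambda>g. (arr src b, g)) ` G b"
    unfolding G_def by force
  also have "(\<Sum>q\<in>(\<lambda>g. (arr src b, g)) ` G b. F q) = (\<Sum>g\<in>G b. F (arr src b, g))"
    by (rule sum.reindex_cong[OF _ refl]) (auto simp: inj_on_def)
  finally show ?thesis .
qed

lemma cb_lin:
  fixes y :: "('v,'a) path \<Rightarrow> 'k::field"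
  assumes y: "y \<in> Diag" and b: "b \<in> Q1"
  shows "(\<Sum>g\<in>G b. cb y b g * (lm (lm S (pt g)) P d)) = lm (lm S (cb y b)) P d"
proof -
  let ?C = "\<lambda>q. \<Sum>g\<in>G b. cb y b g * pt g q"
  have "lm S ?C = (\<lambda>q. \<Sum>g\<in>G b. cb y b g * lm S (pt g) q)"
    by (rule ext) (rule lm_lin_right[OF fin_G])
  then have "lm (lm S ?C) P d = (\<Sum>g\<in>G b. cb y b g * lm (lm S (pt g)) P d)"
    by (simp add: lm_lin_left[OF fin_G])
  moreover have "lm S ?C = lm S (cb y b)"
    by (rule lm_cong) (simp_all add: cb_expand[OF y b])
  ultimately show ?thesis by simp
qed

lemma cb_lin2:
  fixes y :: "('v,'a) path \<Rightarrow> 'k::field"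
  assumes y: "y \<in> Diag" and b: "b \<in> Q1"
  shows "(\<Sum>g\<in>G b. cb y b g * (lm (pt g) x d - lm x (pt g) d)) = lm (cb y b) x d - lm x (cb y b) d"
proof -
  let ?C = "\<lambda>q. \<Sum>g\<in>G b. cb y b g * pt g q"
  have "lm ?C x d = (\<Sum>g\<in>G b. cb y b g * lm (pt g) x d)" by (rule lm_lin_left[OF fin_G])
  moreover have "lm x ?C d = (\<Sum>g\<in>G b. cb y b g * lm x (pt g) d)" by (rule lm_lin_right[OF fin_G])
  moreover have "lm ?C x = lm (cb y b) x" "lm x ?C = lm x (cb y b)"
    by (rule lm_cong; simp add: cb_expand[OF y b])+
  ultimately show ?thesis by (simp add: right_diff_distrib sum_subtractf)
qed


lemma seg_split: "pcat (suf e i) (pre e i) = e" "ptgt tgt (pre e i) = psrc (suf e i)"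
  by (simp_all add: pcat_def suf_def pre_def psrc_def)

lemma seg_B: "e \<in> B \<Longrightarrow> pre e i \<in> B \<and> suf e i \<in> B"
  using B_split[of "suf e i" "pre e i"] seg_split[of e i] by simp

lemma pre_ptgt:
  assumes e: "e \<in> B" and i: "i < length (snd e)"
  shows "ptgt tgt (pre e i) = src (snd e ! i)"
proof (cases i)
  case 0
  then show ?thesis using B_valid[OF e] i unfolding valid_path_def
    by (auto simp: pre_def ptgt_def hd_conv_nth)
next
  case (Suc j)
  have "tgt (snd e ! j) = src (snd e ! Suc j)" using B_valid[OF e] i Suc unfolding valid_path_def by auto
  moreover have "take i (snd e) = take j (snd e) @ [snd e ! j]" using Suc i by (simp add: take_Suc_conv_app_nth)
  ultimately show ?thesis using Suc by (simp add: pre_def ptgt_def)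
qed

lemma pre_ptgt_Suc:
  assumes i: "i < length (snd e)"
  shows "ptgt tgt (pre e (Suc i)) = tgt (snd e ! i)"
  using i by (simp add: pre_def ptgt_def take_Suc_conv_app_nth)

lemma arr_in_Q1: "e \<in> B \<Longrightarrow> i < length (snd e) \<Longrightarrow> snd e ! i \<in> Q1"
  using B_valid unfolding valid_path_def by (meson nth_mem subsetD)

lemma suf_step:
  assumes e: "e \<in> B" and i: "i < length (snd e)"
  shows "pt (suf e i) = lm (pt (suf e (Suc i))) (pt (arr src (snd e ! i)))"
proof -
  have c: "ptgt tgt (arr src (snd e ! i)) = psrc (suf e (Suc i))"
    using pre_ptgt_Suc[OF i] by (simp add: suf_def psrc_def)
  have p: "pcat (suf e (Suc i)) (arr src (snd e ! i)) = suf e i"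
    using pre_ptgt[OF e i] i by (simp add: pcat_def suf_def arr_def Cons_nth_drop_Suc)
  show ?thesis using c p seg_B[OF e] by (simp add: lm_basis)
qed

lemma pre_step:
  assumes e: "e \<in> B" and i: "i < length (snd e)"
  shows "pt (pre e (Suc i)) = lm (pt (arr src (snd e ! i))) (pt (pre e i))"
proof -
  have c: "ptgt tgt (pre e i) = psrc (arr src (snd e ! i))"
    using pre_ptgt[OF e i] by simp
  have p: "pcat (arr src (snd e ! i)) (pre e i) = pre e (Suc i)"
    using i by (simp add: pcat_def pre_def arr_def take_Suc_conv_app_nth)
  show ?thesis using c p seg_B[OF e] by (simp add: lm_basis)
qed

lemma repl_seg: "repl e i g = pcat (suf e (Suc i)) (pcat g (pre e i))"
  by (simp add: repl_def pcat_def suf_def pre_def)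

lemma triple:
  assumes e: "e \<in> B" and i: "i < length (snd e)" and g: "g \<in> G (snd e ! i)"
  shows "lm (lm (pt (suf e (Suc i))) (pt g)) (pt (pre e i)) d =
         (if repl e i g \<in> B \<and> d = repl e i g then 1 else (0::'k::field))"
proof -
  have gD: "g \<in> B" "psrc g = src (snd e ! i)" "ptgt tgt g = tgt (snd e ! i)" using G_D[OF g] by auto
  have c1: "ptgt tgt (pre e i) = psrc g" using pre_ptgt[OF e i] gD by simp
  have c2: "ptgt tgt (pcat g (pre e i)) = psrc (suf e (Suc i))"
    using ptgt_pcat[OF c1] gD pre_ptgt_Suc[OF i] by (simp add: suf_def psrc_def)
  have A: "lm (lm (pt (suf e (Suc i))) (pt g)) (pt (pre e i)) = lm (pt (suf e (Suc i))) (lm (pt g) (pt (pre e i)))"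
    by (rule lm_assoc)
  show ?thesis
  proof (cases "pcat g (pre e i) \<in> B")
    case True
    have I: "lm (pt g) (pt (pre e i)) = pt (pcat g (pre e i))" using True c1 by (simp add: lm_basis)
    have J: "lm (pt (suf e (Suc i))) (pt (pcat g (pre e i))) = (if repl e i g \<in> B then pt (repl e i g) else (\<lambda>_. 0))"
      using c2 by (simp add: lm_basis repl_seg)
    show ?thesis by (simp only: A I J) (simp add: pt_apply)
  next
    case False
    have I: "lm (pt g) (pt (pre e i)) = (\<lambda>_. 0)" using False c1 by (simp add: lm_basis)
    have "repl e i g \<notin> B" using B_split[OF _ c2] False by (auto simp: repl_seg)
    then show ?thesis by (simp only: A I lm_zero_right) simp
  qed
qed

end

context quiv begin

lemma T0:
  fixes x :: "('v,'a) path \<Rightarrow> 'k::field"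
  assumes x: "x \<in> Diag" and e: "e \<in> B"
  shows "lm (lm (pt (suf e 0)) x) (pt (pre e 0)) = lm (pt e) x"
proof -
  obtain v as where ev: "e = (v, as)" by (cases e)
  have v: "v \<in> Q0" using psrc_B[OF e] ev by (simp add: psrc_def)
  have s: "suf e 0 = e" "pre e 0 = (v, [])" using ev by (simp_all add: suf_def pre_def ptgt_def)
  have b: "lm (pt e) (pt (v, [])) = pt e" using e ev by (simp add: lm_basis ptgt_def psrc_def pcat_def)
  have "lm (lm (pt e) x) (pt (v, [])) = lm (pt e) (lm (pt (v, [])) x)"
    by (simp add: lm_assoc Diag_vtx_comm[OF x v])
  also have "\<dots> = lm (pt e) x" by (simp add: lm_assoc[symmetric] b)
  finally show ?thesis using s by simp
qed

lemma Tn: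
  fixes x :: "('v,'a) path \<Rightarrow> 'k::field"
  assumes x: "x \<in> Diag" and e: "e \<in> B"
  shows "lm (lm (pt (suf e (length (snd e)))) x) (pt (pre e (length (snd e)))) = lm x (pt e)"
proof -
  obtain v as where ev: "e = (v, as)" by (cases e)
  define w where "w = ptgt tgt e"
  have w: "w \<in> Q0" unfolding w_def using ptgt_Q0[OF B_valid[OF e]] .
  have s: "suf e (length (snd e)) = (w, [])" "pre e (length (snd e)) = e"
    using ev by (simp_all add: suf_def pre_def w_def)
  have b: "lm (pt (w, [])) (pt e) = pt e" using e ev by (simp add: lm_basis w_def psrc_def pcat_def)
  have "lm (lm (pt (w, [])) x) (pt e) = lm x (lm (pt (w, [])) (pt e))"
    by (simp add: lm_assoc Diag_vtx_comm[OF x w])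
  also have "\<dots> = lm x (pt e)" by (simp add: b)
  finally show ?thesis using s by simp
qed

lemma Tstep:
  fixes x :: "('v,'a) path \<Rightarrow> 'k::field"
  assumes e: "e \<in> B" and i: "i < length (snd e)"
  shows "lm (lm (pt (suf e i)) x) (pt (pre e i)) d - lm (lm (pt (suf e (Suc i))) x) (pt (pre e (Suc i))) d
       = lm (lm (pt (suf e (Suc i))) (cb x (snd e ! i))) (pt (pre e i)) d"
  unfolding suf_step[OF e i] pre_step[OF e i] cb_def
  by (simp add: lm_lin_fun lm_assoc)

lemma lemmaA:
  fixes x :: "('v,'a) path \<Rightarrow> 'k::field"
  assumes x: "x \<in> Diag" and e: "e \<in> B"
  shows "(\<Sum>p\<in>QB1. psiX x p * (\<Sum>i<length (snd e). if snd e ! i = hd (snd (fst p)) \<and> repl e i (snd p) \<in> B \<and> d = repl e i (snd p) then 1 else 0))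
       = lm (pt e) x d - lm x (pt e) d"
proof -
  let ?n = "length (snd e)"
  let ?C = "\<lambda>p i. if snd e ! i = hd (snd (fst p)) \<and> repl e i (snd p) \<in> B \<and> d = repl e i (snd p) then 1 else (0::'k)"
  let ?T = "\<lambda>i. lm (lm (pt (suf e i)) x) (pt (pre e i)) d"
  have "(\<Sum>p\<in>QB1. psiX x p * (\<Sum>i<?n. ?C p i)) = (\<Sum>p\<in>QB1. \<Sum>i<?n. psiX x p * ?C p i)"
    by (simp add: sum_distrib_left)
  also have "\<dots> = (\<Sum>i<?n. \<Sum>p\<in>QB1. psiX x p * ?C p i)"
    by (rule sum.swap)
  also have "\<dots> = (\<Sum>i<?n. ?T i - ?T (Suc i))"
  proof (rule sum.cong[OF refl])
    fix i assume "i \<in> {..<?n}"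
    then have i: "i < ?n" by simp
    define a where "a = snd e ! i"
    have a: "a \<in> Q1" unfolding a_def using arr_in_Q1[OF e i] .
    have "(\<Sum>p\<in>QB1. psiX x p * ?C p i) = (\<Sum>p\<in>QB1. if fst p = arr src a then psiX x p * ?C p i else 0)"
    proof (rule sum.cong[OF refl])
      fix p assume "p \<in> QB1"
      then obtain b g where p: "p = (arr src b, g)" unfolding Q1B_def by auto
      show "psiX x p * ?C p i = (if fst p = arr src a then psiX x p * ?C p i else 0)"
        using p by (auto simp: arr_def a_def)
    qed
    also have "\<dots> = (\<Sum>g\<in>G a. psiX x (arr src a, g) * ?C (arr src a, g) i)"
      by (rule fiber_sum)
    also have "\<dots> = (\<Sum>g\<in>G a. cb x a g * lm (lm (pt (suf e (Suc i))) (pt g)) (pt (pre e i)) d)"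
    proof (rule sum.cong[OF refl])
      fix g assume g: "g \<in> G a"
      have "psiX x (arr src a, g) = cb x a g"
        using g unfolding psiX_formula[OF x] by (simp add: G_def cb_def)
      moreover have "?C (arr src a, g) i = lm (lm (pt (suf e (Suc i))) (pt g)) (pt (pre e i)) d"
      proof -
        have tr: "(lm (lm (pt (suf e (Suc i))) (pt g)) (pt (pre e i)) d :: 'k) = (if repl e i g \<in> B \<and> d = repl e i g then 1 else 0)"
          by (rule triple[OF e i]) (use g a_def in simp)
        show ?thesis unfolding tr by (simp add: a_def arr_def)
      qed
      ultimately show "psiX x (arr src a, g) * ?C (arr src a, g) i = cb x a g * lm (lm (pt (suf e (Suc i))) (pt g)) (pt (pre e i)) d"
        by simp
    qed
    also have "\<dots> = lm (lm (pt (suf e (Suc i))) (cb x a)) (pt (pre e i)) d"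
      by (rule cb_lin[OF x a])
    also have "\<dots> = ?T i - ?T (Suc i)"
      using Tstep[OF e i, of x d] by (simp add: a_def)
    finally show "(\<Sum>p\<in>QB1. psiX x p * ?C p i) = ?T i - ?T (Suc i)" .
  qed
  also have "\<dots> = ?T 0 - ?T ?n" by (rule sum_lessThan_telescope')
  also have "\<dots> = lm (pt e) x d - lm x (pt e) d" using T0[OF x e] Tn[OF x e] by simp
  finally show ?thesis .
qed

end

context quiv begin

lemma subst_pair_eq:
  "subst_pair B eta eps a g r = (if fst r = eta then
     (\<Sum>i<length (snd eps). if snd eps ! i = a \<and> repl eps i g \<in> B \<and> snd r = repl eps i g then 1 else 0) else (0::'k::field))"
proof -
  have S: "{i. i < length (snd eps) \<and> snd eps ! i = a \<and> repl eps i g \<in> B}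
        = {i \<in> {..<length (snd eps)}. snd eps ! i = a \<and> repl eps i g \<in> B}" by auto
  have "subst_pair B eta eps a g r = (\<Sum>i<length (snd eps). if snd eps ! i = a \<and> repl eps i g \<in> B then (pt (eta, repl eps i g) r :: 'k) else 0)"
    unfolding subst_pair_def S by (rule sum.inter_filter) simp
  also have "\<dots> = (if fst r = eta then
     (\<Sum>i<length (snd eps). if snd eps ! i = a \<and> repl eps i g \<in> B \<and> snd r = repl eps i g then 1 else 0) else 0)"
  proof (cases "fst r = eta")
    case True
    then show ?thesis by (auto simp: pt_apply prod_eq_iff intro!: sum.cong)
  next
    case False
    then show ?thesis by (auto simp: pt_apply prod_eq_iff intro!: sum.neutral)
  qed
  finally show ?thesis .
qed

lemma Tm_formula:
  fixes x :: "('v,'a) path \<Rightarrow> 'k::field" and v :: "('v,'a,'k) pvec"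
  assumes x: "x \<in> Diag"
  shows "(\<Sum>p\<in>QB1. \<Sum>q\<in>QB1. psiX x p * v q * subst_pair B (fst q) (snd q) (hd (snd (fst p))) (snd p) r)
       = (\<Sum>q\<in>QB1. if fst q = fst r then v q * (lm (pt (snd q)) x (snd r) - lm x (pt (snd q)) (snd r)) else 0)"
proof -
  have "(\<Sum>p\<in>QB1. \<Sum>q\<in>QB1. psiX x p * v q * subst_pair B (fst q) (snd q) (hd (snd (fst p))) (snd p) r)
      = (\<Sum>q\<in>QB1. \<Sum>p\<in>QB1. psiX x p * v q * subst_pair B (fst q) (snd q) (hd (snd (fst p))) (snd p) r)"
    by (rule sum.swap)
  also have "\<dots> = (\<Sum>q\<in>QB1. if fst q = fst r then v q * (lm (pt (snd q)) x (snd r) - lm x (pt (snd q)) (snd r)) else 0)"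
  proof (rule sum.cong[OF refl])
    fix q assume q: "q \<in> QB1"
    have qB: "snd q \<in> B" using q unfolding Q1B_def by auto
    show "(\<Sum>p\<in>QB1. psiX x p * v q * subst_pair B (fst q) (snd q) (hd (snd (fst p))) (snd p) r)
        = (if fst q = fst r then v q * (lm (pt (snd q)) x (snd r) - lm x (pt (snd q)) (snd r)) else 0)"
    proof (cases "fst q = fst r")
      case True
      have "(\<Sum>p\<in>QB1. psiX x p * v q * subst_pair B (fst q) (snd q) (hd (snd (fst p))) (snd p) r)
          = (\<Sum>p\<in>QB1. v q * (psiX x p * (\<Sum>i<length (snd (snd q)). if snd (snd q) ! i = hd (snd (fst p)) \<and> repl (snd q) i (snd p) \<in> B \<and> snd r = repl (snd q) i (snd p) then 1 else 0)))"
        by (rule sum.cong[OF refl]) (simp add: subst_pair_eq True mult_ac)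
      also have "\<dots> = v q * (\<Sum>p\<in>QB1. psiX x p * (\<Sum>i<length (snd (snd q)). if snd (snd q) ! i = hd (snd (fst p)) \<and> repl (snd q) i (snd p) \<in> B \<and> snd r = repl (snd q) i (snd p) then 1 else 0))"
        by (rule sum_distrib_left[symmetric])
      also have "\<dots> = v q * (lm (pt (snd q)) x (snd r) - lm x (pt (snd q)) (snd r))"
        by (simp only: lemmaA[OF x qB])
      finally show ?thesis using True by simp
    next
      case False
      then show ?thesis unfolding subst_pair_eq by auto
    qed
  qed
  finally show ?thesis .
qed

lemma W_formula:
  fixes x y :: "('v,'a) path \<Rightarrow> 'k::field"
  assumes x: "x \<in> Diag" and y: "y \<in> Diag"
  shows "(\<Sum>q\<in>QB1. if fst q = fst r then psiX y q * (lm (pt (snd q)) x (snd r) - lm x (pt (snd q)) (snd r)) else 0)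
       = (if \<exists>b\<in>Q1. fst r = arr src b then
            lm (cb y (hd (snd (fst r)))) x (snd r) - lm x (cb y (hd (snd (fst r)))) (snd r) else 0)"
proof (cases "\<exists>b\<in>Q1. fst r = arr src b")
  case True
  then obtain b where b: "b \<in> Q1" "fst r = arr src b" by blast
  have hb: "hd (snd (fst r)) = b" using b by (simp add: arr_def)
  have "(\<Sum>q\<in>QB1. if fst q = fst r then psiX y q * (lm (pt (snd q)) x (snd r) - lm x (pt (snd q)) (snd r)) else 0)
      = (\<Sum>g\<in>G b. psiX y (arr src b, g) * (lm (pt g) x (snd r) - lm x (pt g) (snd r)))"
    unfolding b(2) using fiber_sum[of b "\<lambda>q. psiX y q * (lm (pt (snd q)) x (snd r) - lm x (pt (snd q)) (snd r))"] by simp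
  also have "\<dots> = (\<Sum>g\<in>G b. cb y b g * (lm (pt g) x (snd r) - lm x (pt g) (snd r)))"
    by (rule sum.cong[OF refl]) (simp add: psiX_formula[OF y] G_def cb_def)
  also have "\<dots> = lm (cb y b) x (snd r) - lm x (cb y b) (snd r)"
    by (rule cb_lin2[OF y b(1)])
  finally show ?thesis using True hb by simp
next
  case False
  have "fst q \<noteq> fst r" if "q \<in> QB1" for q using that False unfolding Q1B_def by auto
  then show ?thesis using False by simp
qed

lemma bracket_formula:
  fixes x y :: "('v,'a) path \<Rightarrow> 'k::field"
  assumes x: "x \<in> Diag" and y: "y \<in> Diag"
  shows "bracket1 Q1 src tgt B (psiX x) (psiX y) = psiX (\<lambda>d. lm y x d - lm x y d)"
proof (rule ext)
  fix r :: "('v,'a) path \<times> ('v,'a) path"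
  let ?W = "\<lambda>x y. (\<Sum>q\<in>QB1. if fst q = fst r then psiX y q * (lm (pt (snd q)) x (snd r) - lm x (pt (snd q)) (snd r)) else 0)"
  have w: "(\<lambda>d. lm y x d - lm x y d) \<in> Diag" by (intro Diag_diff Diag_mult x y)
  have "bracket1 Q1 src tgt B (psiX x) (psiX y) r
      = (\<Sum>p\<in>QB1. \<Sum>q\<in>QB1. psiX x p * psiX y q * subst_pair B (fst q) (snd q) (hd (snd (fst p))) (snd p) r)
      - (\<Sum>p\<in>QB1. \<Sum>q\<in>QB1. psiX x p * psiX y q * subst_pair B (fst p) (snd p) (hd (snd (fst q))) (snd q) r)"
    unfolding bracket1_def brb_def by (simp add: right_diff_distrib sum_subtractf)
  also have "(\<Sum>p\<in>QB1. \<Sum>q\<in>QB1. psiX x p * psiX y q * subst_pair B (fst p) (snd p) (hd (snd (fst q))) (snd q) r)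
      = (\<Sum>p\<in>QB1. \<Sum>q\<in>QB1. psiX y p * psiX x q * subst_pair B (fst q) (snd q) (hd (snd (fst p))) (snd p) r)"
    by (subst sum.swap) (simp add: mult.commute)
  also have "(\<Sum>p\<in>QB1. \<Sum>q\<in>QB1. psiX x p * psiX y q * subst_pair B (fst q) (snd q) (hd (snd (fst p))) (snd p) r) = ?W x y"
    by (rule Tm_formula[OF x])
  also have "(\<Sum>p\<in>QB1. \<Sum>q\<in>QB1. psiX y p * psiX x q * subst_pair B (fst q) (snd q) (hd (snd (fst p))) (snd p) r) = ?W y x"
    by (rule Tm_formula[OF y])
  finally have br: "bracket1 Q1 src tgt B (psiX x) (psiX y) r = ?W x y - ?W y x" .
  show "bracket1 Q1 src tgt B (psiX x) (psiX y) r = psiX (\<lambda>d. lm y x d - lm x y d) r"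
  proof (cases "\<exists>b\<in>Q1. fst r = arr src b")
    case True
    then obtain b where b: "b \<in> Q1" "fst r = arr src b" by blast
    have hb: "hd (snd (fst r)) = b" using b by (simp add: arr_def)
    have "?W x y - ?W y x = cb (\<lambda>d. lm y x d - lm x y d) b (snd r)"
      unfolding W_formula[OF x y] W_formula[OF y x] using True hb
      by (simp add: cb_def lm_lin_fun lm_assoc algebra_simps)
    also have "\<dots> = psiX (\<lambda>d. lm y x d - lm x y d) r"
    proof (cases "r \<in> QB1")
      case True
      then show ?thesis using b by (simp add: psiX_formula[OF w] cb_def)
    next
      case False
      have "cb (\<lambda>d. lm y x d - lm x y d) b (snd r) = 0"
        using comm_arr_support[OF w b(1), of "snd r"] False b(2)
        by (cases r) (auto simp: cb_def)
      then show ?thesis using False by (simp add: psiX_formula[OF w])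
    qed
    finally show ?thesis using br by simp
  next
    case False
    then have "r \<notin> QB1" unfolding Q1B_def by auto
    then show ?thesis unfolding br W_formula[OF x y] W_formula[OF y x] using False
      by (simp add: psiX_formula[OF w])
  qed
qed

end

context quiv begin

lemma psiX_add: "psiX (\<lambda>d. x d + y d) = (\<lambda>r. psiX x r + psiX y r)"
  by (simp add: psiX_def fun_eq_iff sum.distrib distrib_right)
lemma psiX_diff: "psiX (\<lambda>d. x d - y d) = (\<lambda>r. psiX x r - psiX y r)"
  by (simp add: psiX_def fun_eq_iff sum_subtractf left_diff_distrib)
lemma psiX_scale: "psiX (\<lambda>d. c * x d) = (\<lambda>r. c * psiX x r)"
  by (simp add: psiX_def fun_eq_iff sum_distrib_left mult.assoc)

lemma K:
  fixes x y :: "('v,'a) path \<Rightarrow> 'k::field"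
  assumes x: "x \<in> Diag" and y: "y \<in> Diag" and e: "psiX x = psiX y"
  shows "ad x = ad y"
proof -
  let ?z = "\<lambda>d. x d - y d"
  have z: "?z \<in> Diag" by (rule Diag_diff[OF x y])
  have pz: "psiX ?z = (\<lambda>r. 0)" by (simp add: psiX_diff e)
  have arrc: "lm (pt (arr src b)) ?z = lm ?z (pt (arr src b))" if b: "b \<in> Q1" for b
  proof (rule ext)
    fix d
    show "lm (pt (arr src b)) ?z d = lm ?z (pt (arr src b)) d"
    proof (cases "(arr src b, d) \<in> QB1")
      case True
      have "psiX ?z (arr src b, d) = lm (pt (arr src b)) ?z d - lm ?z (pt (arr src b)) d"
        using True by (simp add: psiX_formula[OF z])
      then show ?thesis using pz by (metis eq_iff_diff_eq_0)
    next
      case False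
      then show ?thesis using comm_arr_support[OF z b, of d] by auto
    qed
  qed
  have c: "lm ?z w = lm w ?z" for w by (rule central[OF z arrc])
  have "ad ?z = (\<lambda>w d. 0)" by (simp add: ad_map_def c fun_eq_iff)
  then have "(\<lambda>w d. ad x w d - ad y w d) = (\<lambda>w d. 0)" by (simp add: ad_diff)
  then show ?thesis by (simp add: fun_eq_iff)
qed

lemma K':
  fixes x y :: "('v,'a) path \<Rightarrow> 'k::field"
  assumes x: "x \<in> Diag" and y: "y \<in> Diag" and e: "ad x = ad y"
  shows "psiX x = psiX y"
proof (rule ext)
  fix r :: "('v,'a) path \<times> ('v,'a) path"
  show "psiX x r = psiX y r"
  proof (cases "r \<in> QB1")
    case True
    then obtain b where b: "b \<in> Q1" "fst r = arr src b" unfolding Q1B_def by auto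
    have l: "(pt (fst r) :: ('v,'a) path \<Rightarrow> 'k) \<in> lam_space B" using lam_pt[OF arr_B[OF b(1)]] b(2) by simp
    have "ad x (pt (fst r)) (snd r) = ad y (pt (fst r)) (snd r)" using e by simp
    then have "lm x (pt (fst r)) (snd r) - lm (pt (fst r)) x (snd r) = lm y (pt (fst r)) (snd r) - lm (pt (fst r)) y (snd r)"
      using l by (simp add: ad_map_def)
    then have "lm (pt (fst r)) x (snd r) - lm x (pt (fst r)) (snd r) = lm (pt (fst r)) y (snd r) - lm y (pt (fst r)) (snd r)"
      by (metis minus_diff_eq)
    then show ?thesis using True by (simp add: psiX_formula[OF x] psiX_formula[OF y])
  next
    case False
    then show ?thesis by (simp add: psiX_formula[OF x] psiX_formula[OF y])
  qed
qed

definition xof :: "('v,'a,'k::field) pvec \<Rightarrow> ('v,'a) path \<Rightarrow> 'k" where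
  "xof u = (SOME x. x \<in> Diag \<and> psiX x = u)"

definition FF :: "('v,'a,'k::field) pvec \<Rightarrow> (('v,'a) path \<Rightarrow> 'k) \<Rightarrow> (('v,'a) path \<Rightarrow> 'k)" where
  "FF u = ad (\<lambda>d. - xof u d)"

lemma FF_eq:
  fixes x :: "('v,'a) path \<Rightarrow> 'k::field"
  assumes x: "x \<in> Diag"
  shows "FF (psiX x) = (\<lambda>y d. - ad x y d)"
proof -
  have "\<exists>x'. x' \<in> Diag \<and> psiX x' = psiX x" using x by blast
  then have s: "xof (psiX x) \<in> Diag \<and> psiX (xof (psiX x)) = psiX x"
    unfolding xof_def by (rule someI_ex)
  then have "ad (xof (psiX x)) = ad x" using K x by blast
  then show ?thesis unfolding FF_def ad_neg by simp
qed

lemma Ad_E_Diag: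
  fixes D :: "(('v,'a) path \<Rightarrow> 'k::field) \<Rightarrow> (('v,'a) path \<Rightarrow> 'k)"
  assumes "D \<in> Ad_E B tgt"
  shows "\<exists>x\<in>Diag. D = ad x"
proof -
  obtain x where x: "x \<in> lam_space B" "D = ad x" "is_E_derivation B tgt D"
    using assms unfolding Ad_E_def by blast
  have "psrc d = ptgt tgt d" if ne: "x d \<noteq> 0" for d
  proof -
    have dB: "d \<in> B" using x(1) ne unfolding lam_space_def by blast
    define e where "e = psrc d"
    have e: "e \<in> Q0" unfolding e_def using psrc_B[OF dB] .
    have ed: "psrc d = e" unfolding e_def ..
    let ?E = "pt (e, []) :: ('v,'a) path \<Rightarrow> 'k"
    have EB: "?E \<in> E_space B" using vertex_B[OF e] by (auto simp: E_space_def lam_space_def pt_apply)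
    have El: "?E \<in> lam_space B" using vertex_B[OF e] lam_pt by blast
    have EE: "lm ?E ?E = ?E" using vertex_B[OF e] by (simp add: lm_basis ptgt_def psrc_def pcat_def)
    have "D (lm ?E (lm ?E ?E)) = lm ?E (lm (D ?E) ?E)"
      using x(3) EB El unfolding is_E_derivation_def by blast
    then have eq: "ad x ?E = lm ?E (lm (ad x ?E) ?E)" using x(2) EE by simp
    have adE: "ad x ?E d' = (if d' \<in> B \<and> psrc d' = e then x d' else 0) - (if d' \<in> B \<and> ptgt tgt d' = e then x d' else 0)" for d'
      using El by (simp add: ad_map_def lm_vtx_left[OF e] lm_vtx_right[OF e])
    have "lm ?E (lm (ad x ?E) ?E) d = (if ptgt tgt d = e then ad x ?E d else 0)"
      using dB ed by (simp add: lm_vtx_left[OF e] lm_vtx_right[OF e])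
    then have "ad x ?E d = (if ptgt tgt d = e then ad x ?E d else 0)" using eq by metis
    then show ?thesis using adE[of d] dB ne ed by (auto split: if_splits)
  qed
  then have "x \<in> Diag" using x(1) unfolding Diag_def by blast
  then show ?thesis using x(2) by blast
qed

theorem main:
  "\<exists>f. lie_iso (Im_psi0 Q0 Q1 src tgt B :: ('v,'a,'k::field) pvec set)
                    (bracket1 Q1 src tgt B)
                    (Ad_E B tgt)
                    comm_bracket f"
proof (rule exI[of _ FF], unfold lie_iso_def Im_psi0_eq, intro conjI ballI allI)
  show "bij_betw FF (psiX ` Diag) (Ad_E B tgt :: ((('v,'a) path \<Rightarrow> 'k) \<Rightarrow> _) set)"
  proof (rule bij_betw_imageI)
    show "inj_on FF (psiX ` Diag :: ('v,'a,'k) pvec set)"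
    proof (rule inj_onI)
      fix u v :: "('v,'a,'k) pvec"
      assume u: "u \<in> psiX ` Diag" and v: "v \<in> psiX ` Diag" and e: "FF u = FF v"
      obtain x where x: "x \<in> Diag" "u = psiX x" using u by blast
      obtain y where y: "y \<in> Diag" "v = psiX y" using v by blast
      have "(\<lambda>w d. - ad x w d) = (\<lambda>w d. - ad y w d)" using e unfolding x(2) y(2) FF_eq[OF x(1)] FF_eq[OF y(1)] .
      then have "ad x = ad y" by (simp add: fun_eq_iff)
      then show "u = v" using K'[OF x(1) y(1)] x y by simp
    qed
  next
    show "FF ` (psiX ` Diag) = (Ad_E B tgt :: ((('v,'a) path \<Rightarrow> 'k) \<Rightarrow> _) set)"
    proof
      show "FF ` (psiX ` Diag) \<subseteq> (Ad_E B tgt :: ((('v,'a) path \<Rightarrow> 'k) \<Rightarrow> _) set)"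
      proof
        fix D assume "D \<in> FF ` (psiX ` (Diag :: (('v,'a) path \<Rightarrow> 'k) set))"
        then obtain x :: "('v,'a) path \<Rightarrow> 'k" where x: "x \<in> Diag" "D = FF (psiX x)" by blast
        have nx: "(\<lambda>d. - x d) \<in> Diag" by (rule Diag_neg[OF x(1)])
        have Dx: "D = ad (\<lambda>d. - x d)" unfolding x(2) FF_eq[OF x(1)] ad_neg ..
        show "D \<in> Ad_E B tgt" unfolding Ad_E_def mem_Collect_eq
          by (rule bexI[of _ "\<lambda>d. - x d"]) (simp_all add: Dx Diag_E_derivation[OF nx] Diag_lam[OF nx])
      qed
    next
      show "(Ad_E B tgt :: ((('v,'a) path \<Rightarrow> 'k) \<Rightarrow> _) set) \<subseteq> FF ` (psiX ` Diag)"
      proof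
        fix D :: "(('v,'a) path \<Rightarrow> 'k) \<Rightarrow> (('v,'a) path \<Rightarrow> 'k)"
        assume "D \<in> Ad_E B tgt"
        then obtain x where x: "x \<in> Diag" "D = ad x" using Ad_E_Diag by blast
        have nx: "(\<lambda>d. - x d) \<in> Diag" by (rule Diag_neg[OF x(1)])
        have "FF (psiX (\<lambda>d. - x d)) = D" unfolding FF_eq[OF nx] ad_neg x(2) by simp
        then show "D \<in> FF ` (psiX ` Diag)" using nx by blast
      qed
    qed
  qed
next
  fix u v :: "('v,'a,'k) pvec"
  assume u: "u \<in> psiX ` Diag" and v: "v \<in> psiX ` Diag"
  obtain x where x: "x \<in> Diag" "u = psiX x" using u by blast
  obtain y where y: "y \<in> Diag" "v = psiX y" using v by blast
  have xy: "(\<lambda>d. x d + y d) \<in> Diag" by (rule Diag_add[OF x(1) y(1)])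
  show "FF (\<lambda>r. u r + v r) = (\<lambda>ya d. FF u ya d + FF v ya d)"
    unfolding x(2) y(2) psiX_add[symmetric] FF_eq[OF xy] FF_eq[OF x(1)] FF_eq[OF y(1)] ad_add
    by simp
next
  fix c :: 'k and u :: "('v,'a,'k) pvec"
  assume u: "u \<in> psiX ` Diag"
  obtain x where x: "x \<in> Diag" "u = psiX x" using u by blast
  have cx: "(\<lambda>d. c * x d) \<in> Diag" by (rule Diag_scale[OF x(1)])
  show "FF (\<lambda>r. c * u r) = (\<lambda>y d. c * FF u y d)"
    unfolding x(2) psiX_scale[symmetric] FF_eq[OF cx] FF_eq[OF x(1)] ad_scale
    by simp
next
  fix u v :: "('v,'a,'k) pvec"
  assume u: "u \<in> psiX ` Diag" and v: "v \<in> psiX ` Diag"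
  obtain x where x: "x \<in> Diag" "u = psiX x" using u by blast
  obtain y where y: "y \<in> Diag" "v = psiX y" using v by blast
  have w: "(\<lambda>d. lm y x d - lm x y d) \<in> Diag" by (intro Diag_diff Diag_mult x(1) y(1))
  have "FF (bracket1 Q1 src tgt B u v) = (\<lambda>z d. - ad (\<lambda>d. lm y x d - lm x y d) z d)"
    unfolding x(2) y(2) bracket_formula[OF x(1) y(1)] FF_eq[OF w] ..
  also have "\<dots> = ad (\<lambda>d. lm (\<lambda>q. - x q) (\<lambda>q. - y q) d - lm (\<lambda>q. - y q) (\<lambda>q. - x q) d)"
    by (simp add: ad_diff lm_neg_left lm_neg_right fun_eq_iff)
  also have "\<dots> = comm_bracket (ad (\<lambda>d. - x d)) (ad (\<lambda>d. - y d))"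
    by (rule comm_ad[symmetric])
  also have "\<dots> = comm_bracket (FF u) (FF v)"
    unfolding x(2) y(2) FF_eq[OF x(1)] FF_eq[OF y(1)] ad_neg ..
  finally show "FF (bracket1 Q1 src tgt B u v) = comm_bracket (FF u) (FF v)" .
qed

end

theorem corollary1p9:
  fixes Q0 :: "'v set" and Q1 :: "'a set" and src tgt :: "'a \<Rightarrow> 'v"
    and Z :: "('v,'a) path set"
  assumes k_closed: "alg_closed TYPE('k::field)"
    and fin_Q0: "finite Q0" and fin_Q1: "finite Q1"
    and arrows: "\<forall>a \<in> Q1. src a \<in> Q0 \<and> tgt a \<in> Q0"
    and Z_paths: "\<forall>p \<in> Z. valid_path Q0 Q1 src tgt p \<and> length (snd p) \<ge> 2"
    and Z_minimal: "\<forall>p \<in> Z. \<forall>q \<in> Z. sublist (snd q) (snd p) \<longrightarrow> q = p"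
    and fin_dim: "finite (Bset Q0 Q1 src tgt Z)"
  shows "\<exists>f. lie_iso (Im_psi0 Q0 Q1 src tgt (Bset Q0 Q1 src tgt Z) :: ('v,'a,'k) pvec set)
                    (bracket1 Q1 src tgt (Bset Q0 Q1 src tgt Z))
                    (Ad_E (Bset Q0 Q1 src tgt Z) tgt)
                    comm_bracket f"
proof -
  interpret quiv Q0 Q1 src tgt Z
    using arrows Z_paths fin_dim fin_Q1 fin_Q0 by unfold_locales auto
  show ?thesis by (rule main)
qed

end
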